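(* Fix $0<\delta\le1$ and assume $h_0\in C_0^\infty(D)$ (extended by $0$ outside $D$). Let $\bar h^{N,\delta}$ be the solution of the discretized equation described in the context with initial data $\bar h^{N,\delta}(0)=\bar h^{N}_0$. Then for every $T>0$, $$\sup_N\sup_{0\le t\le T}\|\nabla^N\bar h^{N,\delta}(t)\|_{L^2(D)}^2<\infty.$$
   Context: Setting: $D\subset\mathbb{R}^d$ is a bounded connected domain with Lipschitz boundary containing the origin, such that for some $C>0$, for all $N$ large, all $z\in\mathbb{Z}^d\setminus(ND\cap\mathbb{Z}^d)$ and all $x,y\in ND\cap\mathbb{Z}^d$ with $|x-z|\le2,|y-z|\le2$, the graph distance in $ND\cap\mathbb{Z}^d$ between $x,y$ is $\le C$. $V:\mathbb{R}\to\mathbb{R}$ is $C^2$, even, $c_-\le V''\le c_+$ with $c_\pm>0$. $\sigma$ is the surface tension of $V$: $\sigma(u)=-\lim_{M\to\infty}M^{-d}\log(Z_M(u)/Z_M(0))$, $Z_M(u)=\int\exp(-\sum_{x\in(\mathbb{Z}/M\mathbb{Z})^d}\sum_{i=1}^dV(\phi(x+e_i)-\phi(x)+u_i))\prod_{x\ne0}d\phi(x)$, $\phi(0)=0$; $\sigma\in C^1$ with $c_-|u-v|^2\le(\nabla\sigma(u)-\nabla\sigma(v))\cdot(u-v)\le c_+|u-v|^2$. $\sigma^\delta=\sigma*\rho_\delta$, $\rho_\delta(u)=\delta^{-d}\rho(u/\delta)$, $\rho\in C_0^\infty$ nonnegative, symmetric, supported in the unit ball, $\int\rho=1$. Discretization: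 $B(\alpha,l)=\prod_i[\alpha_i-l/2,\alpha_i+l/2)$; $D_N=\{x\in ND\cap\mathbb{Z}^d;B(x/N,5/N)\subset D\}$; $\tilde D_N=\bigcup_{x\in D_N}B(x/N,1/N)$. Step functions with mesh $1/N$ are functions constant on each $B(x/N,1/N)$, $x\in\mathbb{Z}^d$. For $f:\mathbb{R}^d\to\mathbb{R}$, $g:\mathbb{R}^d\to\mathbb{R}^d$: $\nabla^N_if(\theta)=N(f(\theta+e_i/N)-f(\theta))$, $\nabla^{N,*}_if(\theta)=-N(f(\theta)-f(\theta-e_i/N))$, $\nabla^Nf=(\nabla^N_1f,\dots,\nabla^N_df)$, $\mathrm{div}_Ng=-\sum_i\nabla^{N,*}_ig_i$, and $\Delta_Nf(\theta)=N\sum_{i=1}^d(\nabla^N_if(\theta)1_{\theta\in\tilde D_N}1_{\theta+e_i/N\in\tilde D_N}-\nabla^N_if(\theta-e_i/N)1_{\theta\in\tilde D_N}1_{\theta-e_i/N\in\tilde D_N})$. The discretized equation is the ODE system for the step function $\bar h^{N,\delta}(t,\cdot)$: $\partial_t\bar h^{N,\delta}(t,\theta)=-\Delta_Nk^{N,\delta}(t,\theta)$, $k^{N,\delta}(t,\theta)=\mathrm{div}_N\{(\nabla\sigma^\delta)(\nabla^N\bar h^{N,\delta}(t))\}(\theta)$ for $\theta\in\tilde D_N$, $\bar h^{N,\delta}(t,\theta)=0$ for $\theta\notin\tilde D_N$, with initial data $\bar h^N_0(\theta)=N^d\int_{B(x/N,1/N)}h_0(\theta')d\theta'$ for $\theta\in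 B(x/N,1/N)$, $x\in\mathbb{Z}^d$. $\|\cdot\|_{L^2(D)}$ of an $\mathbb{R}^d$-valued function is $(\int_D|\cdot|^2)^{1/2}$. *)

theory Defs
  imports "HOL-Analysis.Analysis"
begin

text \<open>C-infinity functions on R^d: differentiable everywhere, with all partial
  derivatives again C-infinity (greatest fixed point).\<close>
coinductive smooth_fun :: "(real^'d \<Rightarrow> real) \<Rightarrow> bool" where
  "(\<forall>x. f differentiable (at x)) \<Longrightarrow>
   (\<forall>i. smooth_fun (\<lambda>x. frechet_derivative f (at x) (axis i 1))) \<Longrightarrow> smooth_fun f"

definition grad :: "(real^'d \<Rightarrow> real) \<Rightarrow> real^'d \<Rightarrow> real^'d" where
  "grad f u = (\<chi> i. frechet_derivative f (at u) (axis i 1))"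

text \<open>Lipschitz boundary: locally, after an orthogonal change of coordinates,
  D is the subgraph of a Lipschitz function of the other d-1 coordinates.\<close>
definition lipschitz_boundary :: "(real^'d) set \<Rightarrow> bool" where
  "lipschitz_boundary D \<longleftrightarrow>
     (\<forall>p\<in>frontier D. \<exists>r>0. \<exists>(R::real^'d \<Rightarrow> real^'d) (j::'d) (g::real^'d \<Rightarrow> real) L.
        orthogonal_transformation R \<and>
        L-lipschitz_on UNIV g \<and>
        (\<forall>y. g y = g (\<chi> k. if k = j then 0 else y $ k)) \<and>
        (\<forall>x\<in>ball p r. x \<in> D \<longleftrightarrow> (R (x - p)) $ j < g (R (x - p))))"

definition lattice :: "(real^'d) set" where
  "lattice = {x. \<forall>i. x $ i \<in> \<int>}"

definition scaled_lattice :: "nat \<Rightarrow> (real^'d) set \<Rightarrow> (real^'d) set" where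
  "scaled_lattice N D = {x \<in> lattice. x \<in> (\<lambda>y. real N *\<^sub>R y) ` D}"

definition lattice_path :: "(real^'d) set \<Rightarrow> real^'d \<Rightarrow> real^'d \<Rightarrow> nat \<Rightarrow> bool" where
  "lattice_path S x y n \<longleftrightarrow> (\<exists>p :: nat \<Rightarrow> real^'d. p 0 = x \<and> p n = y \<and>
      (\<forall>k\<le>n. p k \<in> S) \<and> (\<forall>k<n. norm (p (Suc k) - p k) = 1))"

definition graph_dist_le :: "(real^'d) set \<Rightarrow> real^'d \<Rightarrow> real^'d \<Rightarrow> real \<Rightarrow> bool" where
  "graph_dist_le S x y C \<longleftrightarrow> (\<exists>n. real n \<le> C \<and> lattice_path S x y n)"

definition admissible_domain :: "(real^'d) set \<Rightarrow> bool" where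
  "admissible_domain D \<longleftrightarrow> open D \<and> connected D \<and> bounded D \<and> D \<noteq> {} \<and>
     lipschitz_boundary D \<and> 0 \<in> D \<and>
     (\<exists>C>0. \<exists>N0. \<forall>N\<ge>N0. \<forall>z \<in> lattice - scaled_lattice N D.
        \<forall>x\<in>scaled_lattice N D. \<forall>y\<in>scaled_lattice N D.
          norm (x - z) \<le> 2 \<longrightarrow> norm (y - z) \<le> 2 \<longrightarrow> graph_dist_le (scaled_lattice N D) x y C)"

text \<open>The discrete torus (Z/MZ)^d, represented by representatives in [0,M)^d.\<close>
definition torus :: "nat \<Rightarrow> (int^'d) set" where
  "torus M = {x. \<forall>i. 0 \<le> x $ i \<and> x $ i < int M}"

definition tshift :: "nat \<Rightarrow> int^'d \<Rightarrow> 'd \<Rightarrow> int^'d" where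
  "tshift M x i = (\<chi> j. if j = i then (x $ j + 1) mod int M else x $ j)"

definition hamiltonian :: "(real \<Rightarrow> real) \<Rightarrow> nat \<Rightarrow> real^'d \<Rightarrow> (int^'d \<Rightarrow> real) \<Rightarrow> real" where
  "hamiltonian V M u \<phi> = (\<Sum>x\<in>torus M. \<Sum>i\<in>UNIV. V (\<phi> (tshift M x i) - \<phi> x + u $ i))"

definition partition_fn :: "(real \<Rightarrow> real) \<Rightarrow> nat \<Rightarrow> real^'d \<Rightarrow> real" where
  "partition_fn V M u = (integral\<^sup>L (PiM (torus M - {0}) (\<lambda>_. lborel))
      (\<lambda>\<phi>. exp (- hamiltonian V M u (\<lambda>x. if x = 0 then 0 else \<phi> x))))"

definition surface_tension :: "(real \<Rightarrow> real) \<Rightarrow> real^'d \<Rightarrow> real" where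
  "surface_tension V u = - lim (\<lambda>M. (1 / real M ^ CARD('d)) *
       ln (partition_fn V M u / partition_fn V M (0::real^'d)))"

definition rho_delta :: "(real^'d \<Rightarrow> real) \<Rightarrow> real \<Rightarrow> real^'d \<Rightarrow> real" where
  "rho_delta \<rho> \<delta> u = (1 / \<delta> ^ CARD('d)) * \<rho> ((1 / \<delta>) *\<^sub>R u)"

definition sigma_delta :: "(real\<Rightarrow>real) \<Rightarrow> (real^'d \<Rightarrow> real) \<Rightarrow> real \<Rightarrow> real^'d \<Rightarrow> real" where
  "sigma_delta V \<rho> \<delta> u = integral UNIV (\<lambda>v. surface_tension V (u - v) * rho_delta \<rho> \<delta> v)"

definition cube :: "real^'d \<Rightarrow> real \<Rightarrow> (real^'d) set" where
  "cube \<alpha> l = {\<theta>. \<forall>i. \<alpha> $ i - l/2 \<le> \<theta> $ i \<and> \<theta> $ i < \<alpha> $ i + l/2}"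

definition DN :: "nat \<Rightarrow> (real^'d) set \<Rightarrow> (real^'d) set" where
  "DN N D = {x \<in> scaled_lattice N D. cube ((1 / real N) *\<^sub>R x) (5 / real N) \<subseteq> D}"

definition tDN :: "nat \<Rightarrow> (real^'d) set \<Rightarrow> (real^'d) set" where
  "tDN N D = (\<Union>x\<in>DN N D. cube ((1 / real N) *\<^sub>R x) (1 / real N))"

definition step_fun :: "nat \<Rightarrow> (real^'d \<Rightarrow> real) \<Rightarrow> bool" where
  "step_fun N f \<longleftrightarrow> (\<forall>x\<in>lattice. \<forall>\<theta>\<in>cube ((1 / real N) *\<^sub>R x) (1 / real N).
       f \<theta> = f ((1 / real N) *\<^sub>R x))"

definition nablaN_i :: "nat \<Rightarrow> 'd \<Rightarrow> (real^'d \<Rightarrow> real) \<Rightarrow> real^'d \<Rightarrow> real" where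
  "nablaN_i N i f \<theta> = real N * (f (\<theta> + (1 / real N) *\<^sub>R axis i 1) - f \<theta>)"

definition nablaN :: "nat \<Rightarrow> (real^'d \<Rightarrow> real) \<Rightarrow> real^'d \<Rightarrow> real^'d" where
  "nablaN N f \<theta> = (\<chi> i. nablaN_i N i f \<theta>)"

definition nablaN_star_i :: "nat \<Rightarrow> 'd \<Rightarrow> (real^'d \<Rightarrow> real) \<Rightarrow> real^'d \<Rightarrow> real" where
  "nablaN_star_i N i f \<theta> = - real N * (f \<theta> - f (\<theta> - (1 / real N) *\<^sub>R axis i 1))"

definition divN :: "nat \<Rightarrow> (real^'d \<Rightarrow> real^'d) \<Rightarrow> real^'d \<Rightarrow> real" where
  "divN N g \<theta> = - (\<Sum>i\<in>UNIV. nablaN_star_i N i (\<lambda>\<eta>. g \<eta> $ i) \<theta>)"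

definition ind :: "bool \<Rightarrow> real" where
  "ind b = (if b then 1 else 0)"

definition LapN :: "nat \<Rightarrow> (real^'d) set \<Rightarrow> (real^'d \<Rightarrow> real) \<Rightarrow> real^'d \<Rightarrow> real" where
  "LapN N D f \<theta> = real N * (\<Sum>i\<in>UNIV.
      nablaN_i N i f \<theta> * ind (\<theta> \<in> tDN N D) * ind (\<theta> + (1 / real N) *\<^sub>R axis i 1 \<in> tDN N D)
    - nablaN_i N i f (\<theta> - (1 / real N) *\<^sub>R axis i 1) * ind (\<theta> \<in> tDN N D)
        * ind (\<theta> - (1 / real N) *\<^sub>R axis i 1 \<in> tDN N D))"

definition kN :: "(real\<Rightarrow>real) \<Rightarrow> (real^'d \<Rightarrow> real) \<Rightarrow> real \<Rightarrow> nat \<Rightarrow> (real^'d \<Rightarrow> real) \<Rightarrow> real^'d \<Rightarrow> real" where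
  "kN V \<rho> \<delta> N f = divN N (\<lambda>\<eta>. grad (sigma_delta V \<rho> \<delta>) (nablaN N f \<eta>))"

definition discrete_solution ::
  "(real\<Rightarrow>real) \<Rightarrow> (real^'d \<Rightarrow> real) \<Rightarrow> real \<Rightarrow> (real^'d) set \<Rightarrow> (real^'d \<Rightarrow> real)
     \<Rightarrow> nat \<Rightarrow> (real \<Rightarrow> real^'d \<Rightarrow> real) \<Rightarrow> bool" where
  "discrete_solution V \<rho> \<delta> D h0 N h \<longleftrightarrow>
     (\<forall>t\<ge>0. step_fun N (h t)) \<and>
     (\<forall>x\<in>lattice. \<forall>\<theta>\<in>cube ((1 / real N) *\<^sub>R x) (1 / real N). \<theta> \<in> tDN N D \<longrightarrow>
        h 0 \<theta> = real N ^ CARD('d) * integral (cube ((1 / real N) *\<^sub>R x) (1 / real N)) h0) \<and>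
     (\<forall>t\<ge>0. \<forall>\<theta>. \<theta> \<notin> tDN N D \<longrightarrow> h t \<theta> = 0) \<and>
     (\<forall>t\<ge>0. \<forall>\<theta>\<in>tDN N D.
        ((\<lambda>s. h s \<theta>) has_real_derivative (- LapN N D (kN V \<rho> \<delta> N (h t)) \<theta>)) (at t within {0..}))"

end

theory Submission
  imports Defs
begin


lemma fd_grad:
  fixes f :: "real^'d \<Rightarrow> real"
  assumes "f differentiable (at u)"
  shows "frechet_derivative f (at u) h = grad f u \<bullet> h"
proof -
  have lin: "linear (frechet_derivative f (at u))"
    using assms frechet_derivative_works has_derivative_linear by blast
  have "frechet_derivative f (at u) h = frechet_derivative f (at u) (\<Sum>i\<in>UNIV. h$i *\<^sub>R axis i 1)"
    using basis_expansion[of h] by (simp add: scalar_mult_eq_scaleR)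
  also have "\<dots> = (\<Sum>i\<in>UNIV. h$i * frechet_derivative f (at u) (axis i 1))"
    using lin by (simp add: linear_sum linear_scale)
  also have "\<dots> = grad f u \<bullet> h"
    by (simp add: grad_def inner_vec_def mult.commute)
  finally show ?thesis .
qed

lemma has_derivative_grad:
  fixes f :: "real^'d \<Rightarrow> real"
  assumes "f differentiable (at u)"
  shows "(f has_derivative (\<lambda>h. grad f u \<bullet> h)) (at u)"
proof -
  have "(f has_derivative frechet_derivative f (at u)) (at u)"
    using assms frechet_derivative_works by blast
  moreover have "frechet_derivative f (at u) = (\<lambda>h. grad f u \<bullet> h)"
    using fd_grad[OF assms] by auto
  ultimately show ?thesis by simp
qed

lemma quad_bounds:
  fixes f :: "real^'d \<Rightarrow> real"
  assumes diff: "\<forall>u. f differentiable (at u)"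
    and conv: "\<forall>u v. cm * (norm (u - v))\<^sup>2 \<le> (grad f u - grad f v) \<bullet> (u - v)
        \<and> (grad f u - grad f v) \<bullet> (u - v) \<le> cp * (norm (u - v))\<^sup>2"
  shows "cm/2 * (norm (u - v))\<^sup>2 \<le> f u - f v - grad f v \<bullet> (u - v)
       \<and> f u - f v - grad f v \<bullet> (u - v) \<le> cp/2 * (norm (u - v))\<^sup>2"
proof -
  define w where "w = u - v"
  define \<phi> where "\<phi> = (\<lambda>s. f (v + s *\<^sub>R w))"
  have dphi: "(\<phi> has_real_derivative (grad f (v + s *\<^sub>R w) \<bullet> w)) (at s)" for s
  proof -
    have "((\<lambda>s. v + s *\<^sub>R w) has_derivative (\<lambda>r. r *\<^sub>R w)) (at s)"
      by (auto intro!: derivative_eq_intros)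
    from has_derivative_compose[OF this has_derivative_grad[OF diff[rule_format]]]
    have "(\<phi> has_derivative (\<lambda>r. grad f (v + s *\<^sub>R w) \<bullet> (r *\<^sub>R w))) (at s)"
      by (simp add: \<phi>_def o_def)
    moreover have "(\<lambda>r. r * (grad f (v + s *\<^sub>R w) \<bullet> w)) = (*) (grad f (v + s *\<^sub>R w) \<bullet> w)"
      by (auto simp: mult.commute)
    ultimately show ?thesis
      by (simp add: has_field_derivative_def)
  qed
  have mono: "cm * s * (norm w)\<^sup>2 \<le> (grad f (v + s *\<^sub>R w) - grad f v) \<bullet> w
      \<and> (grad f (v + s *\<^sub>R w) - grad f v) \<bullet> w \<le> cp * s * (norm w)\<^sup>2" if "s > 0" for s
  proof -
    have c: "cm * (norm (s *\<^sub>R w))\<^sup>2 \<le> (grad f (v + s *\<^sub>R w) - grad f v) \<bullet> (s *\<^sub>R w)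
        \<and> (grad f (v + s *\<^sub>R w) - grad f v) \<bullet> (s *\<^sub>R w) \<le> cp * (norm (s *\<^sub>R w))\<^sup>2"
      using conv[rule_format, of "v + s *\<^sub>R w" v] by simp
    have "(norm (s *\<^sub>R w))\<^sup>2 = s * (s * (norm w)\<^sup>2)" using that
      by (simp add: power2_eq_square)
    then have "s * (cm * s * (norm w)\<^sup>2) \<le> s * ((grad f (v + s *\<^sub>R w) - grad f v) \<bullet> w)
        \<and> s * ((grad f (v + s *\<^sub>R w) - grad f v) \<bullet> w) \<le> s * (cp * s * (norm w)\<^sup>2)"
      using c by (simp add: inner_scaleR_right mult.assoc mult.left_commute)
    then show ?thesis using that by (simp add: mult_le_cancel_left_pos)
  qed
  define g0 where "g0 = grad f v \<bullet> w"
  define L where "L s = \<phi> s - \<phi> 0 - g0 * s - cm/2 * s\<^sup>2 * (norm w)\<^sup>2" for s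
  define U where "U s = cp/2 * s\<^sup>2 * (norm w)\<^sup>2 - (\<phi> s - \<phi> 0 - g0 * s)" for s
  have dL: "(L has_real_derivative (grad f (v + s *\<^sub>R w) \<bullet> w - g0 - cm * s * (norm w)\<^sup>2)) (at s)" for s
    unfolding L_def by (auto intro!: derivative_eq_intros dphi simp: field_simps power2_eq_square)
  have dU: "(U has_real_derivative (cp * s * (norm w)\<^sup>2 - (grad f (v + s *\<^sub>R w) \<bullet> w - g0))) (at s)" for s
    unfolding U_def by (auto intro!: derivative_eq_intros dphi simp: field_simps power2_eq_square)
  have "L 0 \<le> L 1"
  proof (rule DERIV_nonneg_imp_increasing_open[of 0 1 L])
    fix s :: real assume a: "0 < s" "s < 1"
    show "\<exists>y. (L has_real_derivative y) (at s) \<and> 0 \<le> y"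
      using dL[of s] mono[OF a(1)] by (auto simp: g0_def inner_diff_left)
  next
    show "continuous_on {0..1} L"
      using dL by (meson DERIV_isCont continuous_at_imp_continuous_on)
  qed simp
  moreover have "U 0 \<le> U 1"
  proof (rule DERIV_nonneg_imp_increasing_open[of 0 1 U])
    fix s :: real assume a: "0 < s" "s < 1"
    show "\<exists>y. (U has_real_derivative y) (at s) \<and> 0 \<le> y"
      using dU[of s] mono[OF a(1)] by (auto simp: g0_def inner_diff_left)
  next
    show "continuous_on {0..1} U"
      using dU by (meson DERIV_isCont continuous_at_imp_continuous_on)
  qed simp
  ultimately show ?thesis
    by (simp add: L_def U_def \<phi>_def w_def g0_def)
qed


lemma smooth_cont: "smooth_fun f \<Longrightarrow> continuous_on UNIV f"
  by (erule smooth_fun.cases) (meson continuous_at_imp_continuous_on differentiable_imp_continuous_within)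

lemma smooth_diff: "smooth_fun f \<Longrightarrow> f differentiable (at x)"
  by (erule smooth_fun.cases) auto

lemma smooth_partial: "smooth_fun f \<Longrightarrow> smooth_fun (\<lambda>x. frechet_derivative f (at x) (axis i 1))"
  by (erule smooth_fun.cases) auto

lemma norm_ge_comp: "\<bar>x $ i\<bar> \<le> norm (x::real^'d)"
  by (rule component_le_norm_cart)

lemma X0: fixes v :: "real^'d" shows "(\<forall>i. \<bar>v$i\<bar> \<le> 1) \<Longrightarrow> v \<in> cbox (-1) 1"
  by (auto simp: mem_box_cart abs_le_iff)
lemma X: fixes v :: "real^'d" shows "v \<notin> cbox (-1) 1 \<Longrightarrow> \<exists>i. \<bar>v$i\<bar> > 1"
  using X0[of v] by (meson not_le)
lemma Y: fixes v :: "real^'d" assumes "norm v > 1" "0 < \<delta>" "\<delta> \<le> 1"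
  shows  "norm ((1/\<delta>) *\<^sub>R v) > 1"
proof -
  have "norm ((1/\<delta>) *\<^sub>R v) = norm v / \<delta>" using assms by simp
  also have "\<dots> \<ge> norm v" using assms by (simp add: divide_simps mult_left_le)
  finally show ?thesis using assms by simp
qed

lemma rho_zero_out:
  fixes \<rho> :: "real^'d \<Rightarrow> real"
  assumes supp: "closure {v. \<rho> v \<noteq> 0} \<subseteq> cball 0 1"
  shows "norm v > 1 \<Longrightarrow> \<rho> v = 0"
proof (rule ccontr)
  assume "norm v > 1" "\<rho> v \<noteq> 0"
  then have "v \<in> {v. \<rho> v \<noteq> 0}" by simp
  then have "v \<in> closure {v. \<rho> v \<noteq> 0}" by (rule subsetD[OF closure_subset])
  then have "v \<in> cball 0 1" by (rule subsetD[OF supp])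
  then show False using \<open>norm v > 1\<close> by (simp add: mem_cball_0)
qed

lemma rho_delta_zero_out:
  fixes \<rho> :: "real^'d \<Rightarrow> real"
  assumes supp: "closure {v. \<rho> v \<noteq> 0} \<subseteq> cball 0 1" and d: "0 < \<delta>" "\<delta> \<le> 1"
  shows "v \<notin> cbox (-1) 1 \<Longrightarrow> rho_delta \<rho> \<delta> v = 0"
proof -
  assume "v \<notin> cbox (-1) 1"
  then obtain i where "\<bar>v$i\<bar> > 1" using X by blast
  then have "norm v > 1" using norm_ge_comp[of v i] by linarith
  then have "norm ((1/\<delta>) *\<^sub>R v) > 1" using d Y by blast
  then show ?thesis using rho_zero_out[OF supp] by (simp add: rho_delta_def)
qed

lemma rho_delta_cont:
  fixes \<rho> :: "real^'d \<Rightarrow> real"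
  assumes "continuous_on UNIV \<rho>"
  shows "continuous_on UNIV (rho_delta \<rho> \<delta>)"
  unfolding rho_delta_def
  by (intro continuous_intros continuous_on_compose2[OF assms]) auto

lemma rho_delta_int:
  fixes \<rho> :: "real^'d \<Rightarrow> real"
  assumes supp: "closure {v. \<rho> v \<noteq> 0} \<subseteq> cball 0 1" and d: "0 < \<delta>" "\<delta> \<le> 1"
    and int: "integral UNIV \<rho> = 1"
  shows "(rho_delta \<rho> \<delta> has_integral 1) UNIV"
proof -
  have zero: "v \<notin> cbox (-1) 1 \<Longrightarrow> \<rho> v = 0" for v
    using rho_delta_zero_out[OF supp, of 1 v] by (simp add: rho_delta_def)
  have "\<rho> integrable_on UNIV" using int not_integrable_integral by fastforce
  then have "(\<rho> has_integral 1) UNIV" using int by (simp add: has_integral_iff)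
  then have "((\<lambda>x. if x \<in> cbox (-1) 1 then \<rho> x else 0) has_integral 1) UNIV"
    by (rule has_integral_eq[rotated]) (use zero in auto)
  then have r: "(\<rho> has_integral 1) (cbox (-1) 1)"
    by (simp add: has_integral_restrict_UNIV)
  have "((\<lambda>x. \<rho> ((1/\<delta>) *\<^sub>R x + 0)) has_integral (1 /\<^sub>R (1/\<delta>) ^ DIM(real^'d)))
           (cbox ((-1 - 0) /\<^sub>R (1/\<delta>)) ((1 - 0) /\<^sub>R (1/\<delta>)))"
    by (rule has_integral_affinity'[OF r]) (use d in simp)
  then have "((\<lambda>x. (1 / \<delta> ^ CARD('d)) * \<rho> ((1/\<delta>) *\<^sub>R x)) has_integral
       (1 / \<delta> ^ CARD('d)) * (1 /\<^sub>R (1/\<delta>) ^ DIM(real^'d)))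
           (cbox ((-1 - 0) /\<^sub>R (1/\<delta>)) ((1 - 0) /\<^sub>R (1/\<delta>)))"
    by (intro has_integral_mult_right) simp
  moreover have "rho_delta \<rho> \<delta> = (\<lambda>x. (1 / \<delta> ^ CARD('d)) * \<rho> ((1/\<delta>) *\<^sub>R x))"
    by (simp add: rho_delta_def fun_eq_iff)
  moreover have "(1 / \<delta> ^ CARD('d)) * (1 /\<^sub>R (1/\<delta>) ^ DIM(real^'d)) = 1"
    using d by (simp add: power_one_over)
  ultimately have h: "(rho_delta \<rho> \<delta> has_integral 1) (cbox ((-1 - 0) /\<^sub>R (1/\<delta>)) ((1 - 0) /\<^sub>R (1/\<delta>)))"
    by simp
  show ?thesis
  proof (rule has_integral_on_superset[OF h])
    fix x :: "real^'d" assume x: "x \<notin> cbox ((-1 - 0) /\<^sub>R (1/\<delta>)) ((1 - 0) /\<^sub>R (1/\<delta>))"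
    have "(1/\<delta>) *\<^sub>R x \<notin> cbox (-1) 1"
    proof
      assume "(1/\<delta>) *\<^sub>R x \<in> cbox (-1) 1"
      then have "\<forall>i. -1 \<le> x$i / \<delta> \<and> x$i / \<delta> \<le> 1" by (simp add: mem_box_cart)
      then have "\<forall>i. -\<delta> \<le> x$i \<and> x$i \<le> \<delta>" using d by (simp add: divide_simps)
      then have "x \<in> cbox ((-1 - 0) /\<^sub>R (1/\<delta>)) ((1 - 0) /\<^sub>R (1/\<delta>))"
        by (simp add: mem_box_cart)
      then show False using x by blast
    qed
    then show "rho_delta \<rho> \<delta> x = 0" using zero by (simp add: rho_delta_def)
  qed auto
qed

lemma rho_delta_integrable:
  fixes \<rho> :: "real^'d \<Rightarrow> real" and g :: "real^'d \<Rightarrow> 'b::euclidean_space"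
  assumes supp: "closure {v. \<rho> v \<noteq> 0} \<subseteq> cball 0 1" and d: "0 < \<delta>" "\<delta> \<le> 1"
    and rc: "continuous_on UNIV \<rho>" and gc: "continuous_on UNIV g"
  shows "(\<lambda>v. rho_delta \<rho> \<delta> v *\<^sub>R g v) integrable_on UNIV"
proof (rule integrable_on_superset)
  show "(\<lambda>v. rho_delta \<rho> \<delta> v *\<^sub>R g v) integrable_on cbox (-1) 1"
    by (intro integrable_continuous continuous_intros continuous_on_subset[OF rho_delta_cont[OF rc]]
        continuous_on_subset[OF gc]) auto
qed (use rho_delta_zero_out[OF supp d] in auto)


context
  fixes V :: "real \<Rightarrow> real" and \<rho> :: "real^'d \<Rightarrow> real" and \<delta> cm cp :: real
  assumes sd: "\<forall>u::real^'d. surface_tension V differentiable (at u)"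
    and sc: "continuous_on UNIV (grad (surface_tension V :: real^'d \<Rightarrow> real))"
    and sconv: "\<forall>u v :: real^'d. cm * (norm (u - v))\<^sup>2
          \<le> (grad (surface_tension V) u - grad (surface_tension V) v) \<bullet> (u - v)
        \<and> (grad (surface_tension V) u - grad (surface_tension V) v) \<bullet> (u - v)
          \<le> cp * (norm (u - v))\<^sup>2"
    and cm: "0 < cm"
    and rc: "continuous_on UNIV \<rho>"
    and rn: "\<forall>v. 0 \<le> \<rho> v"
    and rs: "closure {v. \<rho> v \<noteq> 0} \<subseteq> cball 0 1"
    and ri: "integral UNIV \<rho> = 1"
    and d: "0 < \<delta>" "\<delta> \<le> 1"
begin

abbreviation "\<sigma> \<equiv> (surface_tension V :: real^'d \<Rightarrow> real)"
abbreviation "r \<equiv> rho_delta \<rho> \<delta>"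
definition "Gc v = integral UNIV (\<lambda>w. r w *\<^sub>R grad \<sigma> (v - w))"

lemma sig_cont: "continuous_on UNIV \<sigma>"
  using sd by (meson continuous_at_imp_continuous_on differentiable_imp_continuous_within)

lemma r_nonneg: "0 \<le> r w"
  using rn d by (simp add: rho_delta_def)

lemma int1: "(\<lambda>w. \<sigma> (u - w) * r w) integrable_on UNIV"
proof -
  have "(\<lambda>w. r w *\<^sub>R \<sigma> (u - w)) integrable_on UNIV"
    by (rule rho_delta_integrable[OF rs d rc])
       (intro continuous_on_compose2[OF sig_cont] continuous_intros, auto)
  then show ?thesis by (simp add: mult.commute)
qed

lemma int2: "(\<lambda>w. r w *\<^sub>R grad \<sigma> (v - w)) integrable_on UNIV"
  by (rule rho_delta_integrable[OF rs d rc])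
     (intro continuous_on_compose2[OF sc] continuous_intros, auto)

lemma sd_quad:
  fixes u v :: "real^'d"
  shows "cm/2 * (norm (u - v))\<^sup>2 \<le> sigma_delta V \<rho> \<delta> u - sigma_delta V \<rho> \<delta> v - Gc v \<bullet> (u - v)
    \<and> sigma_delta V \<rho> \<delta> u - sigma_delta V \<rho> \<delta> v - Gc v \<bullet> (u - v) \<le> cp/2 * (norm (u - v))\<^sup>2"
proof -
  define q where "q w = (\<sigma> (u - w) - \<sigma> (v - w) - grad \<sigma> (v - w) \<bullet> (u - v)) * r w" for w
  have i3: "(\<lambda>w. (r w *\<^sub>R grad \<sigma> (v - w)) \<bullet> (u - v)) integrable_on UNIV"
    using integrable_linear[OF int2[of v] bounded_linear_inner_left[of "u - v"]] by (simp add: o_def)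
  have qeq: "q w = \<sigma> (u - w) * r w - \<sigma> (v - w) * r w - (r w *\<^sub>R grad \<sigma> (v - w)) \<bullet> (u - v)" for w
    by (simp add: q_def algebra_simps)
  have qi: "q integrable_on UNIV"
    unfolding qeq[abs_def] by (intro integrable_diff int1 i3)
  have "integral UNIV q = sigma_delta V \<rho> \<delta> u - sigma_delta V \<rho> \<delta> v
        - integral UNIV (\<lambda>w. (r w *\<^sub>R grad \<sigma> (v - w)) \<bullet> (u - v))"
    unfolding qeq[abs_def] sigma_delta_def
    by (simp only: integral_diff[OF integrable_diff[OF int1 int1] i3] integral_diff[OF int1 int1])
  also have "integral UNIV (\<lambda>w. (r w *\<^sub>R grad \<sigma> (v - w)) \<bullet> (u - v)) = Gc v \<bullet> (u - v)"
    using integral_linear[OF int2[of v] bounded_linear_inner_left[of "u - v"]]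
    by (simp add: o_def Gc_def)
  finally have qint: "integral UNIV q = sigma_delta V \<rho> \<delta> u - sigma_delta V \<rho> \<delta> v - Gc v \<bullet> (u - v)" .
  have rint: "(r has_integral 1) UNIV" by (rule rho_delta_int[OF rs d ri])
  have pw: "cm/2 * (norm (u - v))\<^sup>2 * r w \<le> q w \<and> q w \<le> cp/2 * (norm (u - v))\<^sup>2 * r w" for w
  proof -
    have "cm/2 * (norm ((u - w) - (v - w)))\<^sup>2 \<le> \<sigma> (u - w) - \<sigma> (v - w) - grad \<sigma> (v - w) \<bullet> ((u - w) - (v - w))
       \<and> \<sigma> (u - w) - \<sigma> (v - w) - grad \<sigma> (v - w) \<bullet> ((u - w) - (v - w)) \<le> cp/2 * (norm ((u - w) - (v - w)))\<^sup>2"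
      by (rule quad_bounds[OF sd sconv])
    then have h: "cm/2 * (norm (u - v))\<^sup>2 \<le> \<sigma> (u - w) - \<sigma> (v - w) - grad \<sigma> (v - w) \<bullet> (u - v)"
       "\<sigma> (u - w) - \<sigma> (v - w) - grad \<sigma> (v - w) \<bullet> (u - v) \<le> cp/2 * (norm (u - v))\<^sup>2" by auto
    show ?thesis unfolding q_def
      using mult_right_mono[OF h(1) r_nonneg[of w]] mult_right_mono[OF h(2) r_nonneg[of w]] by simp
  qed
  have "integral UNIV (\<lambda>w. cm/2 * (norm (u - v))\<^sup>2 * r w) \<le> integral UNIV q"
    by (rule integral_le) (use pw qi has_integral_mult_right[OF rint] in auto)
  moreover have "integral UNIV q \<le> integral UNIV (\<lambda>w. cp/2 * (norm (u - v))\<^sup>2 * r w)"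
    by (rule integral_le) (use pw qi has_integral_mult_right[OF rint] in auto)
  moreover have "integral UNIV r = 1" using rint by (simp add: has_integral_iff)
  ultimately show ?thesis using qint by simp
qed

lemma sd_deriv: "(sigma_delta V \<rho> \<delta> has_derivative (\<lambda>h. Gc v \<bullet> h)) (at v)"
  unfolding has_derivative_at_alt
proof (intro conjI allI impI)
  show "bounded_linear ((\<bullet>) (Gc v))" by (rule bounded_linear_inner_right)
  fix e :: real assume e: "e > 0"
  have "(1::real^'d) \<noteq> 0" by (simp add: vec_eq_iff)
  then have n2: "(norm (1::real^'d))\<^sup>2 > 0" by simp
  have "cm/2 * (norm ((1::real^'d) - 0))\<^sup>2 \<le> cp/2 * (norm ((1::real^'d) - 0))\<^sup>2"
    using sd_quad[of 1 0] by linarith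
  then have "cm/2 \<le> cp/2" using n2 by (simp add: mult_le_cancel_right_pos)
  then have cp: "cp \<ge> 0" using cm by linarith
  define dd where "dd = e / (cp/2 + 1)"
  have dd: "dd > 0" using e cp by (simp add: dd_def)
  show "\<exists>d>0. \<forall>y. norm (y - v) < d \<longrightarrow>
      norm (sigma_delta V \<rho> \<delta> y - sigma_delta V \<rho> \<delta> v - Gc v \<bullet> (y - v)) \<le> e * norm (y - v)"
  proof (intro exI[of _ dd] conjI allI impI dd)
    fix y assume y: "norm (y - v) < dd"
    have b: "0 \<le> sigma_delta V \<rho> \<delta> y - sigma_delta V \<rho> \<delta> v - Gc v \<bullet> (y - v)
      \<and> sigma_delta V \<rho> \<delta> y - sigma_delta V \<rho> \<delta> v - Gc v \<bullet> (y - v) \<le> cp/2 * (norm (y - v))\<^sup>2"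
    proof -
      have "0 \<le> cm/2 * (norm (y - v))\<^sup>2" using cm by simp
      then show ?thesis using sd_quad[of y v] by linarith
    qed
    have "cp/2 * (norm (y - v))\<^sup>2 = (cp/2 * norm (y - v)) * norm (y - v)"
      by (simp add: power2_eq_square)
    also have "\<dots> \<le> e * norm (y - v)"
    proof (rule mult_right_mono)
      have "cp/2 * norm (y - v) \<le> cp/2 * dd" using y cp by (intro mult_left_mono) auto
      also have "\<dots> \<le> (cp/2 + 1) * dd" using dd by (simp add: distrib_right)
      finally have "cp/2 * norm (y - v) \<le> (cp/2 + 1) * dd" .
      also have "\<dots> = e" using cp by (simp add: dd_def)
      finally show "cp/2 * norm (y - v) \<le> e" .
    qed simp
    finally show "norm (sigma_delta V \<rho> \<delta> y - sigma_delta V \<rho> \<delta> v - Gc v \<bullet> (y - v)) \<le> e * norm (y - v)"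
      using b by simp
  qed
qed

lemma grad_sd: "grad (sigma_delta V \<rho> \<delta>) v = Gc v"
proof -
  have "frechet_derivative (sigma_delta V \<rho> \<delta>) (at v) = (\<lambda>h. Gc v \<bullet> h)"
    using frechet_derivative_at[OF sd_deriv] by simp
  then show ?thesis by (simp add: grad_def inner_axis vec_eq_iff)
qed

lemma sd_facts:
  "(sigma_delta V \<rho> \<delta> has_derivative (\<lambda>h. grad (sigma_delta V \<rho> \<delta>) v \<bullet> h)) (at v)"
  "cm/2 * (norm (u - v))\<^sup>2 \<le> sigma_delta V \<rho> \<delta> u - sigma_delta V \<rho> \<delta> v - grad (sigma_delta V \<rho> \<delta>) v \<bullet> (u - v)"
  "sigma_delta V \<rho> \<delta> u - sigma_delta V \<rho> \<delta> v - grad (sigma_delta V \<rho> \<delta>) v \<bullet> (u - v) \<le> cp/2 * (norm (u - v))\<^sup>2"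
  using sd_deriv sd_quad[of u v] by (simp_all add: grad_sd)

end


definition pt :: "nat \<Rightarrow> real^'d \<Rightarrow> real^'d" where "pt N x = (1 / real N) *\<^sub>R x"
definition idx :: "nat \<Rightarrow> real^'d \<Rightarrow> real^'d" where
  "idx N \<theta> = (\<chi> j. of_int (floor (real N * \<theta>$j + 1/2)))"

lemma lattice_axis: "x \<in> lattice \<Longrightarrow> x + axis i 1 \<in> lattice" "x \<in> lattice \<Longrightarrow> x - axis i 1 \<in> lattice"
  by (auto simp: lattice_def axis_def)

lemma idx_lattice: "idx N \<theta> \<in> lattice"
  by (simp add: lattice_def idx_def)

lemma cube_char:
  assumes N: "N \<ge> 1" and x: "x \<in> lattice"
  shows "\<theta> \<in> cube (pt N x) (1 / real N) \<longleftrightarrow> x = idx N \<theta>"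
proof -
  have Np: "real N > 0" using N by simp
  have "\<theta> \<in> cube (pt N x) (1 / real N) \<longleftrightarrow>
      (\<forall>j. x$j / real N - 1 / real N / 2 \<le> \<theta>$j \<and> \<theta>$j < x$j / real N + 1 / real N / 2)"
    by (simp add: cube_def pt_def)
  also have "\<dots> \<longleftrightarrow> (\<forall>j. x$j \<le> real N * \<theta>$j + 1/2 \<and> real N * \<theta>$j + 1/2 < x$j + 1)"
    using Np by (simp add: field_simps)
  also have "\<dots> \<longleftrightarrow> (\<forall>j. x$j = of_int (floor (real N * \<theta>$j + 1/2)))"
  proof -
    have "x$j \<le> real N * \<theta>$j + 1/2 \<and> real N * \<theta>$j + 1/2 < x$j + 1 \<longleftrightarrow> x$j = of_int (floor (real N * \<theta>$j + 1/2))" for j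
    proof -
      obtain k where k: "x$j = of_int k" using x by (auto simp: lattice_def elim: Ints_cases)
      show ?thesis unfolding k using floor_eq_iff[of "real N * \<theta>$j + 1/2" k] by auto
    qed
    then show ?thesis by simp
  qed
  also have "\<dots> \<longleftrightarrow> x = idx N \<theta>" by (simp add: idx_def vec_eq_iff)
  finally show ?thesis .
qed

lemma in_own_cube: "N \<ge> 1 \<Longrightarrow> x \<in> lattice \<Longrightarrow> pt N x \<in> cube (pt N x) (1 / real N)"
  by (simp add: cube_def)

lemma idx_pt: "N \<ge> 1 \<Longrightarrow> x \<in> lattice \<Longrightarrow> idx N (pt N x) = x"
  using cube_char[of N x "pt N x"] in_own_cube[of N x] by simp

lemma in_idx_cube: "N \<ge> 1 \<Longrightarrow> \<theta> \<in> cube (pt N (idx N \<theta>)) (1 / real N)"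
  using cube_char[of N "idx N \<theta>" \<theta>] idx_lattice[of N \<theta>] by simp

lemma pt_shift: "pt N (x + axis i 1) = pt N x + (1 / real N) *\<^sub>R axis i 1"
  "pt N (x - axis i 1) = pt N x - (1 / real N) *\<^sub>R axis i 1"
  by (simp_all add: pt_def scaleR_right_distrib scaleR_right_diff_distrib)

lemma cube_shift:
  "\<theta> \<in> cube c l \<Longrightarrow> \<theta> + a \<in> cube (c + a) l"
  "\<theta> \<in> cube c l \<Longrightarrow> \<theta> - a \<in> cube (c - a) l"
  by (auto simp: cube_def)

lemma idx_shift:
  assumes "N \<ge> 1"
  shows "idx N (\<theta> + (1 / real N) *\<^sub>R axis i 1) = idx N \<theta> + axis i 1"
    "idx N (\<theta> - (1 / real N) *\<^sub>R axis i 1) = idx N \<theta> - axis i 1"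
proof -
  have "\<theta> + (1 / real N) *\<^sub>R axis i 1 \<in> cube (pt N (idx N \<theta> + axis i 1)) (1 / real N)"
    unfolding pt_shift by (rule cube_shift(1)[OF in_idx_cube[OF assms]])
  then show "idx N (\<theta> + (1 / real N) *\<^sub>R axis i 1) = idx N \<theta> + axis i 1"
    using cube_char[OF assms lattice_axis(1)[OF idx_lattice]] by metis
  have "\<theta> - (1 / real N) *\<^sub>R axis i 1 \<in> cube (pt N (idx N \<theta> - axis i 1)) (1 / real N)"
    unfolding pt_shift by (rule cube_shift(2)[OF in_idx_cube[OF assms]])
  then show "idx N (\<theta> - (1 / real N) *\<^sub>R axis i 1) = idx N \<theta> - axis i 1"
    using cube_char[OF assms lattice_axis(2)[OF idx_lattice]] by metis
qed

lemma DN_lattice: "DN N D \<subseteq> lattice"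
  by (auto simp: DN_def scaled_lattice_def)

lemma tDN_iff:
  assumes N: "N \<ge> 1"
  shows "\<theta> \<in> tDN N D \<longleftrightarrow> idx N \<theta> \<in> DN N D"
proof
  assume "\<theta> \<in> tDN N D"
  then obtain x where x: "x \<in> DN N D" "\<theta> \<in> cube ((1 / real N) *\<^sub>R x) (1 / real N)"
    by (auto simp: tDN_def)
  then have "x = idx N \<theta>" using cube_char[OF N] DN_lattice by (metis pt_def subsetD)
  then show "idx N \<theta> \<in> DN N D" using x by simp
next
  assume "idx N \<theta> \<in> DN N D"
  then show "\<theta> \<in> tDN N D" using in_idx_cube[OF N, of \<theta>] by (auto simp: tDN_def pt_def)
qed

lemma tDN_pt: "N \<ge> 1 \<Longrightarrow> x \<in> lattice \<Longrightarrow> pt N x \<in> tDN N D \<longleftrightarrow> x \<in> DN N D"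
  using tDN_iff idx_pt by metis

lemma finite_lattice_bounded:
  assumes "S \<subseteq> lattice" "bounded S"
  shows "finite S"
proof -
  obtain R where R: "\<forall>x\<in>S. norm x \<le> R" using assms(2) by (auto simp: bounded_iff)
  define M where "M = ceiling R"
  have "S \<subseteq> (\<lambda>f. \<chi> j. real_of_int (f j)) ` (PiE UNIV (\<lambda>_. {-M..M}))"
  proof
    fix x assume x: "x \<in> S"
    define f where "f = (\<lambda>j. floor (x$j))"
    have xf: "x$j = real_of_int (f j)" for j
      using x assms(1) by (auto simp: lattice_def f_def elim!: Ints_cases)
    have "\<bar>x$j\<bar> \<le> R" for j using component_le_norm_cart[of x j] R x by auto
    then have "f j \<in> {-M..M}" for j
    proof -
      have "- R \<le> real_of_int (f j)" "real_of_int (f j) \<le> R" using xf[of j] \<open>\<bar>x$j\<bar> \<le> R\<close> by auto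
      then show ?thesis unfolding M_def by (simp add: le_ceiling_iff ceiling_le_iff) linarith
    qed
    then have "f \<in> PiE UNIV (\<lambda>_. {-M..M})" by auto
    moreover have "x = (\<chi> j. real_of_int (f j))" using xf by (simp add: vec_eq_iff)
    ultimately show "x \<in> (\<lambda>f. \<chi> j. real_of_int (f j)) ` (PiE UNIV (\<lambda>_. {-M..M}))" by blast
  qed
  moreover have "finite (PiE (UNIV::'a set) (\<lambda>_. {-M..M}))" by (intro finite_PiE) auto
  ultimately show ?thesis using finite_subset by blast
qed

lemma DN_finite:
  assumes "bounded D"
  shows "finite (DN N D)"
proof (rule finite_lattice_bounded[OF DN_lattice])
  have "DN N D \<subseteq> (\<lambda>y. real N *\<^sub>R y) ` D" by (auto simp: DN_def scaled_lattice_def)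
  moreover have "bounded ((\<lambda>y. real N *\<^sub>R y) ` D)"
    using assms by (intro bounded_linear_image) (auto intro: bounded_linear_scaleR_right)
  ultimately show "bounded (DN N D)" using bounded_subset by blast
qed

lemma cube_box:
  assumes "l > 0"
  shows "box (c - (l/2) *\<^sub>R 1) (c + (l/2) *\<^sub>R 1) \<subseteq> cube c l"
    "cube c l \<subseteq> cbox (c - (l/2) *\<^sub>R 1) (c + (l/2) *\<^sub>R 1)"
  by (auto simp: cube_def mem_box_cart less_imp_le)

lemma cube_has_integral_iff:
  fixes g :: "real^'d \<Rightarrow> real"
  assumes "l > 0"
  shows "(g has_integral I) (cube c l) \<longleftrightarrow> (g has_integral I) (cbox (c - (l/2) *\<^sub>R 1) (c + (l/2) *\<^sub>R 1))"
proof (rule has_integral_spike_set_eq)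
  show "negligible {x \<in> cube c l - cbox (c - (l/2) *\<^sub>R 1) (c + (l/2) *\<^sub>R 1). g x \<noteq> 0}"
    using cube_box[OF assms] by (intro negligible_subset[OF negligible_empty]) auto
  show "negligible {x \<in> cbox (c - (l/2) *\<^sub>R 1) (c + (l/2) *\<^sub>R 1) - cube c l. g x \<noteq> 0}"
    using cube_box[OF assms] by (intro negligible_subset[OF negligible_frontier_interval]) auto
qed

lemma content_cube_box:
  assumes "l > 0"
  shows "measure lborel (cbox (c - (l/2) *\<^sub>R 1) (c + (l/2) *\<^sub>R (1::real^'d))) = l ^ CARD('d)"
proof -
  have ne: "cbox (c - (l/2) *\<^sub>R 1) (c + (l/2) *\<^sub>R (1::real^'d)) \<noteq> {}"
    using assms by (auto simp: interval_eq_empty_cart)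
  show ?thesis using content_cbox_cart[OF ne] by simp
qed

lemma cube_integral_one:
  assumes "l > 0"
  shows "((\<lambda>\<theta>::real^'d. if \<theta> \<in> cube c l then 1 else 0) has_integral l ^ CARD('d)) UNIV"
proof -
  have "((\<lambda>_. 1::real) has_integral l ^ CARD('d)) (cbox (c - (l/2) *\<^sub>R 1) (c + (l/2) *\<^sub>R (1::real^'d)))"
    using has_integral_const[of "1::real" "c - (l/2) *\<^sub>R 1" "c + (l/2) *\<^sub>R (1::real^'d)"]
      content_cube_box[OF assms, of c] by simp
  then have "((\<lambda>_. 1::real) has_integral l ^ CARD('d)) (cube c l)"
    using cube_has_integral_iff[OF assms] by blast
  then show ?thesis by (simp add: has_integral_restrict_UNIV)
qed

lemma step_integral:
  fixes f :: "real^'d \<Rightarrow> real"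
  assumes N: "N \<ge> 1" and P: "finite P" "P \<subseteq> lattice"
    and step: "\<forall>\<theta>. f \<theta> = f (pt N (idx N \<theta>))"
    and zero: "\<forall>x\<in>lattice - P. f (pt N x) = 0"
  shows "(f has_integral (\<Sum>x\<in>P. f (pt N x)) / real N ^ CARD('d)) UNIV"
proof -
  have Np: "(1 / real N) > 0" using N by simp
  have each: "((\<lambda>\<theta>. f (pt N x) * (if \<theta> \<in> cube (pt N x) (1 / real N) then 1 else 0))
       has_integral f (pt N x) * (1 / real N) ^ CARD('d)) UNIV" for x
    by (rule has_integral_mult_right[OF cube_integral_one[OF Np]])
  have eq: "f \<theta> = (\<Sum>x\<in>P. f (pt N x) * (if \<theta> \<in> cube (pt N x) (1 / real N) then 1 else 0))" for \<theta>
  proof -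
    have "(\<Sum>x\<in>P. f (pt N x) * (if \<theta> \<in> cube (pt N x) (1 / real N) then 1 else 0))
        = (\<Sum>x\<in>P. if x = idx N \<theta> then f (pt N x) else 0)"
      by (rule sum.cong) (use cube_char[OF N] P(2) in auto)
    also have "\<dots> = (if idx N \<theta> \<in> P then f (pt N (idx N \<theta>)) else 0)"
      using P(1) by (simp add: sum.delta')
    also have "\<dots> = f \<theta>"
    proof (cases "idx N \<theta> \<in> P")
      case False
      then have "f (pt N (idx N \<theta>)) = 0" using zero idx_lattice[of N \<theta>] by blast
      then show ?thesis using False step by metis
    qed (use step in metis)
    finally show ?thesis by simp
  qed
  have "((\<lambda>\<theta>. \<Sum>x\<in>P. f (pt N x) * (if \<theta> \<in> cube (pt N x) (1 / real N) then 1 else 0))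
     has_integral (\<Sum>x\<in>P. f (pt N x) * (1 / real N) ^ CARD('d))) UNIV"
    by (rule has_integral_sum[OF P(1) each])
  then show ?thesis
    by (simp add: eq[symmetric] sum_divide_distrib[symmetric] power_one_over field_simps)
qed


lemma sum_shift_ind:
  fixes A :: "'a::ab_group_add set" and f :: "'a \<Rightarrow> real"
  assumes "finite A"
  shows "(\<Sum>y\<in>A. f y * ind (y - e \<in> A)) = (\<Sum>z\<in>A. f (z + e) * ind (z + e \<in> A))"
proof -
  have "(\<Sum>y\<in>A. f y * ind (y - e \<in> A)) = (\<Sum>y\<in>{y\<in>A. y - e \<in> A}. f y)"
    using assms by (simp add: ind_def sum.inter_filter[symmetric] if_distrib cong: if_cong)
  also have "{y\<in>A. y - e \<in> A} = (\<lambda>z. z + e) ` {z\<in>A. z + e \<in> A}"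
    by (auto simp: image_iff) (metis diff_add_cancel)
  also have "(\<Sum>y\<in>(\<lambda>z. z + e) ` {z\<in>A. z + e \<in> A}. f y) = (\<Sum>z\<in>{z\<in>A. z + e \<in> A}. f (z + e))"
    by (rule sum.reindex_cong[where l="\<lambda>z. z + e"]) (auto simp: inj_on_def)
  also have "\<dots> = (\<Sum>z\<in>A. f (z + e) * ind (z + e \<in> A))"
    using assms by (simp add: ind_def sum.inter_filter[symmetric] if_distrib cong: if_cong)
  finally show ?thesis .
qed

lemma sum_transfer:
  assumes "finite A" "finite B" "\<forall>x\<in>A-B. f x = 0" "\<forall>x\<in>B-A. f x = 0"
  shows "sum f A = sum f B"
proof -
  have "sum f A = sum f (A \<union> B)" using assms by (intro sum.mono_neutral_left) auto
  also have "\<dots> = sum f B" using assms by (intro sum.mono_neutral_right) auto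
  finally show ?thesis .
qed

lemma sum_shift:
  fixes A :: "'a::ab_group_add set"
  shows "(\<Sum>x\<in>A. f (x + e)) = (\<Sum>y\<in>(\<lambda>x. x + e) ` A. f y)"
  by (subst sum.reindex) (auto simp: inj_on_def o_def)

context
  fixes V :: "real \<Rightarrow> real" and \<rho> :: "real^'d \<Rightarrow> real" and \<delta> :: real
    and N :: nat and D :: "(real^'d) set" and h0 :: "real^'d \<Rightarrow> real"
    and h :: "real \<Rightarrow> real^'d \<Rightarrow> real"
  assumes sdd: "\<forall>v. (sigma_delta V \<rho> \<delta> has_derivative (\<lambda>k. grad (sigma_delta V \<rho> \<delta>) v \<bullet> k)) (at v)"
    and N: "N \<ge> 1" and Db: "bounded D"
    and sol: "discrete_solution V \<rho> \<delta> D h0 N h"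
begin

abbreviation "G \<equiv> grad (sigma_delta V \<rho> \<delta>)"
definition "a t y = h t (pt N y)"
definition "g t x = nablaN N (h t) (pt N x)"
definition "PP = DN N D \<union> (\<Union>i. (\<lambda>x. x - axis i 1) ` DN N D)"
definition "\<psi> u = sigma_delta V \<rho> \<delta> u - sigma_delta V \<rho> \<delta> 0 - G 0 \<bullet> u"
definition "F t = (\<Sum>x\<in>PP. \<psi> (g t x))"
definition "w t y = (if y \<in> DN N D then - LapN N D (kN V \<rho> \<delta> N (h t)) (pt N y) else 0)"
definition "gd t x = (\<chi> i. real N * (w t (x + axis i 1) - w t x))"

lemma PP_finite: "finite PP"
  unfolding PP_def using DN_finite[OF Db] by auto

lemma PP_lattice: "PP \<subseteq> lattice"
  unfolding PP_def using DN_lattice lattice_axis by fastforce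

lemma g_comp: "g t x $ i = real N * (a t (x + axis i 1) - a t x)"
  by (simp add: g_def a_def nablaN_def nablaN_i_def pt_shift)

lemma a_zero: "t \<ge> 0 \<Longrightarrow> y \<in> lattice \<Longrightarrow> y \<notin> DN N D \<Longrightarrow> a t y = 0"
proof -
  assume "t \<ge> 0" "y \<in> lattice" "y \<notin> DN N D"
  then have "pt N y \<notin> tDN N D" using tDN_pt[OF N] by blast
  then show "a t y = 0" using sol \<open>t \<ge> 0\<close> unfolding discrete_solution_def a_def by blast
qed

lemma w_zero: "y \<notin> DN N D \<Longrightarrow> w t y = 0"
  by (simp add: w_def)

lemma a_deriv:
  assumes t: "t \<ge> 0" and y: "y \<in> lattice"
  shows "((\<lambda>s. a s y) has_real_derivative w t y) (at t within {0..})"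
proof (cases "y \<in> DN N D")
  case True
  then have "pt N y \<in> tDN N D" using tDN_pt[OF N y] by simp
  then show ?thesis using sol t True by (auto simp: discrete_solution_def a_def w_def)
next
  case False
  have "((\<lambda>s. 0::real) has_real_derivative 0) (at t within {0..})" by simp
  then have "((\<lambda>s. a s y) has_real_derivative 0) (at t within {0..})"
    by (rule has_field_derivative_transform_within[OF _ zero_less_one]) (use t False a_zero y in auto)
  then show ?thesis using False by (simp add: w_def)
qed

lemma g_expand: "g s x = (\<Sum>i\<in>UNIV. (real N * (a s (x + axis i 1) - a s x)) *\<^sub>R axis i 1)"
  using basis_expansion[of "g s x"] by (simp add: g_comp scalar_mult_eq_scaleR)

lemma g_deriv:
  assumes t: "t \<ge> 0" and x: "x \<in> lattice"
  shows "((\<lambda>s. g s x) has_derivative (\<lambda>r. r *\<^sub>R gd t x)) (at t within {0..})"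
proof -
  have d: "((\<lambda>s. real N * (a s (x + axis i 1) - a s x)) has_real_derivative
        real N * (w t (x + axis i 1) - w t x)) (at t within {0..})" for i
    by (intro DERIV_cmult DERIV_diff a_deriv t x lattice_axis)
  have dd: "((\<lambda>s. \<Sum>i\<in>UNIV. (real N * (a s (x + axis i 1) - a s x)) *\<^sub>R axis i 1) has_derivative
       (\<lambda>r. \<Sum>i\<in>UNIV. ((real N * (w t (x + axis i 1) - w t x)) * r) *\<^sub>R axis i 1)) (at t within {0..})"
    by (intro has_derivative_sum has_derivative_scaleR_left[OF d[unfolded has_field_derivative_def]])
  have ee: "(\<lambda>r. \<Sum>i\<in>UNIV. ((real N * (w t (x + axis i 1) - w t x)) * r) *\<^sub>R axis i 1)
      = (\<lambda>r. r *\<^sub>R gd t x)"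
  proof
    fix r
    have "r *\<^sub>R gd t x = (\<Sum>i\<in>UNIV. (r *\<^sub>R gd t x) $ i *\<^sub>R axis i 1)"
      using basis_expansion[of "r *\<^sub>R gd t x"] by (simp add: scalar_mult_eq_scaleR)
    then show "(\<Sum>i\<in>UNIV. ((real N * (w t (x + axis i 1) - w t x)) * r) *\<^sub>R axis i 1) = r *\<^sub>R gd t x"
      by (simp add: gd_def mult.commute)
  qed
  show ?thesis unfolding g_expand[abs_def] by (rule has_derivative_eq_rhs[OF dd ee])
qed

lemma psi_deriv: "(\<psi> has_derivative (\<lambda>k. (G u - G 0) \<bullet> k)) (at u)"
proof -
  have "(\<psi> has_derivative (\<lambda>k. G u \<bullet> k - 0 - G 0 \<bullet> k)) (at u)"
    unfolding \<psi>_def[abs_def]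
    by (intro derivative_intros sdd[rule_format])
  then show ?thesis by (simp add: inner_diff_left)
qed

lemma F_deriv:
  assumes t: "t \<ge> 0"
  shows "(F has_real_derivative (\<Sum>x\<in>PP. (G (g t x) - G 0) \<bullet> gd t x)) (at t within {0..})"
proof -
  have "((\<lambda>s. \<psi> (g s x)) has_derivative (\<lambda>r. (G (g t x) - G 0) \<bullet> (r *\<^sub>R gd t x))) (at t within {0..})"
    if "x \<in> PP" for x
    using has_derivative_compose[OF g_deriv[OF t] psi_deriv] PP_lattice that by blast
  then have "(F has_derivative (\<lambda>r. \<Sum>x\<in>PP. (G (g t x) - G 0) \<bullet> (r *\<^sub>R gd t x))) (at t within {0..})"
    unfolding F_def[abs_def] by (rule has_derivative_sum)
  moreover have "(\<lambda>r. \<Sum>x\<in>PP. (G (g t x) - G 0) \<bullet> (r *\<^sub>R gd t x)) = (*) (\<Sum>x\<in>PP. (G (g t x) - G 0) \<bullet> gd t x)"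
    by (auto simp: sum_distrib_left sum_distrib_right mult.commute)
  ultimately show ?thesis by (simp add: has_field_derivative_def)
qed

lemma k_formula:
  "kN V \<rho> \<delta> N (h t) (pt N y) = (\<Sum>i\<in>UNIV. real N * (G (g t y) $ i - G (g t (y - axis i 1)) $ i))"
  by (simp add: kN_def divN_def nablaN_star_i_def g_def pt_shift sum_negf[symmetric])

lemma Lap_formula:
  assumes y: "y \<in> DN N D"
  shows "LapN N D k (pt N y) = real N * (\<Sum>i\<in>UNIV.
      real N * (k (pt N (y + axis i 1)) - k (pt N y)) * ind (y + axis i 1 \<in> DN N D)
    - real N * (k (pt N y) - k (pt N (y - axis i 1))) * ind (y - axis i 1 \<in> DN N D))"
proof -
  have yl: "y \<in> lattice" using y DN_lattice by blast
  have "pt N y \<in> tDN N D" using tDN_pt[OF N yl] y by simp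
  moreover have "pt N y + (1 / real N) *\<^sub>R axis i 1 \<in> tDN N D \<longleftrightarrow> y + axis i 1 \<in> DN N D" for i
    using tDN_pt[OF N lattice_axis(1)[OF yl]] by (simp add: pt_shift)
  moreover have "pt N y - (1 / real N) *\<^sub>R axis i 1 \<in> tDN N D \<longleftrightarrow> y - axis i 1 \<in> DN N D" for i
    using tDN_pt[OF N lattice_axis(2)[OF yl]] by (simp add: pt_shift)
  ultimately show ?thesis
    by (simp add: LapN_def nablaN_i_def ind_def pt_shift)
qed

lemma dissip:
  "(\<Sum>y\<in>DN N D. k (pt N y) * LapN N D k (pt N y)) \<le> 0"
proof -
  define K where "K y = k (pt N y)" for y
  have fin: "finite (DN N D)" using DN_finite[OF Db] .
  define A where "A i = (\<Sum>y\<in>DN N D. K y * (real N * (K (y + axis i 1) - K y) * ind (y + axis i 1 \<in> DN N D)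
    - real N * (K y - K (y - axis i 1)) * ind (y - axis i 1 \<in> DN N D)))" for i
  have Ai: "A i \<le> 0" for i
  proof -
    let ?e = "axis i (1::real)"
    have s: "(\<Sum>y\<in>DN N D. (K y * (K y - K (y - ?e))) * ind (y - ?e \<in> DN N D))
        = (\<Sum>z\<in>DN N D. (K (z + ?e) * (K (z + ?e) - K (z + ?e - ?e))) * ind (z + ?e \<in> DN N D))"
      by (rule sum_shift_ind[OF fin, of "\<lambda>y. K y * (K y - K (y - ?e))"])
    have "A i = real N * ((\<Sum>y\<in>DN N D. K y * (K (y + ?e) - K y) * ind (y + ?e \<in> DN N D))
        - (\<Sum>y\<in>DN N D. (K y * (K y - K (y - ?e))) * ind (y - ?e \<in> DN N D)))"
      unfolding A_def by (simp add: sum_distrib_left sum_subtractf[symmetric] algebra_simps)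
    also have "\<dots> = real N * (\<Sum>y\<in>DN N D. - ((K (y + ?e) - K y)\<^sup>2 * ind (y + ?e \<in> DN N D)))"
      unfolding s by (simp add: sum_subtractf[symmetric] power2_eq_square algebra_simps)
    also have "\<dots> \<le> 0"
      by (intro mult_nonneg_nonpos sum_nonpos) (auto simp: ind_def)
    finally show ?thesis .
  qed
  have "(\<Sum>y\<in>DN N D. k (pt N y) * LapN N D k (pt N y)) = real N * (\<Sum>i\<in>UNIV. A i)"
    unfolding A_def K_def
    by (simp add: Lap_formula sum_distrib_left sum.swap[of _ "DN N D"] algebra_simps cong: sum.cong)
  also have "\<dots> \<le> 0" using Ai by (intro mult_nonneg_nonpos sum_nonpos) auto
  finally show ?thesis .
qed

lemma sbp:
  "(\<Sum>x\<in>PP. (G (g t x) - G 0) \<bullet> gd t x) = - (\<Sum>y\<in>DN N D. w t y * kN V \<rho> \<delta> N (h t) (pt N y))"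
proof -
  define u where "u x = G (g t x) - G 0" for x
  have fin: "finite (DN N D)" using DN_finite[OF Db] .
  have s1: "(\<Sum>x\<in>PP. u x $ i * w t (x + axis i 1)) = (\<Sum>y\<in>DN N D. u (y - axis i 1) $ i * w t y)" for i
  proof -
    have "(\<Sum>x\<in>PP. u x $ i * w t (x + axis i 1)) = (\<Sum>x\<in>PP. u (x + axis i 1 - axis i 1) $ i * w t (x + axis i 1))"
      by simp
    also have "\<dots> = (\<Sum>y\<in>(\<lambda>x. x + axis i 1) ` PP. u (y - axis i 1) $ i * w t y)"
      by (rule sum_shift)
    also have "\<dots> = (\<Sum>y\<in>DN N D. u (y - axis i 1) $ i * w t y)"
    proof (rule sum_transfer)
      show "\<forall>x\<in>DN N D - (\<lambda>x. x + axis i 1) ` PP. u (x - axis i 1) $ i * w t x = 0"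
      proof
        fix y assume "y \<in> DN N D - (\<lambda>x. x + axis i 1) ` PP"
        moreover have "y - axis i 1 \<in> PP" if "y \<in> DN N D" using that by (auto simp: PP_def)
        ultimately show "u (y - axis i 1) $ i * w t y = 0" by (metis DiffE diff_add_cancel image_eqI)
      qed
    qed (use PP_finite fin w_zero in auto)
    finally show ?thesis .
  qed
  have s2: "(\<Sum>x\<in>PP. u x $ i * w t x) = (\<Sum>y\<in>DN N D. u y $ i * w t y)" for i
    by (rule sum_transfer) (use PP_finite fin w_zero in \<open>auto simp: PP_def\<close>)
  have "(\<Sum>x\<in>PP. (G (g t x) - G 0) \<bullet> gd t x) = (\<Sum>x\<in>PP. \<Sum>i\<in>UNIV. u x $ i * (real N * (w t (x + axis i 1) - w t x)))"
    by (simp add: u_def gd_def inner_vec_def)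
  also have "\<dots> = (\<Sum>i\<in>UNIV. real N * ((\<Sum>x\<in>PP. u x $ i * w t (x + axis i 1)) - (\<Sum>x\<in>PP. u x $ i * w t x)))"
    by (simp add: sum.swap[of _ PP] sum_distrib_left sum_subtractf[symmetric] algebra_simps)
  also have "\<dots> = (\<Sum>i\<in>UNIV. real N * ((\<Sum>y\<in>DN N D. u (y - axis i 1) $ i * w t y) - (\<Sum>y\<in>DN N D. u y $ i * w t y)))"
    by (simp add: s1 s2)
  also have "\<dots> = - (\<Sum>y\<in>DN N D. w t y * (\<Sum>i\<in>UNIV. real N * (G (g t y) $ i - G (g t (y - axis i 1)) $ i)))"
    by (simp add: sum.swap[of _ "DN N D"] sum_distrib_left sum_subtractf[symmetric] algebra_simps u_def
         sum_negf[symmetric])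
  also have "\<dots> = - (\<Sum>y\<in>DN N D. w t y * kN V \<rho> \<delta> N (h t) (pt N y))"
    by (simp add: k_formula)
  finally show ?thesis .
qed

lemma F_deriv_nonpos: "(\<Sum>x\<in>PP. (G (g t x) - G 0) \<bullet> gd t x) \<le> 0"
proof -
  have "(\<Sum>x\<in>PP. (G (g t x) - G 0) \<bullet> gd t x)
      = (\<Sum>y\<in>DN N D. kN V \<rho> \<delta> N (h t) (pt N y) * LapN N D (kN V \<rho> \<delta> N (h t)) (pt N y))"
    unfolding sbp by (simp add: w_def sum_negf[symmetric] mult.commute)
  also have "\<dots> \<le> 0" by (rule dissip)
  finally show ?thesis .
qed

lemma F_decr:
  assumes t: "t \<ge> 0"
  shows "F t \<le> F 0"
proof -
  have "- F 0 \<le> - F t"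
  proof (rule DERIV_nonneg_imp_increasing_open[of 0 t "\<lambda>s. - F s"])
    fix s :: real assume s: "0 < s" "s < t"
    have "interior {0::real..} = {0<..}" by simp
    then have "at s within {0..} = at s" using s by (intro at_within_interior) auto
    then have "(F has_real_derivative (\<Sum>x\<in>PP. (G (g s x) - G 0) \<bullet> gd s x)) (at s)"
      using F_deriv[of s] s by simp
    then show "\<exists>y. ((\<lambda>s. - F s) has_real_derivative y) (at s) \<and> 0 \<le> y"
      using F_deriv_nonpos[of s] by (intro exI conjI) (rule DERIV_minus, auto)
  next
    show "continuous_on {0..t} (\<lambda>s. - F s)"
    proof (intro continuous_on_minus)
      have "continuous (at s within {0..}) F" if "s \<in> {0..t}" for s
        using F_deriv[of s] that by (auto intro: DERIV_continuous)
      then show "continuous_on {0..t} F"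
        unfolding continuous_on_eq_continuous_within
        by (meson atLeastAtMost_iff atLeast_iff continuous_within_subset subsetI)
    qed
  qed (use t in auto)
  then show ?thesis by simp
qed

end


lemma supp_zero:
  fixes f :: "'a::topological_space \<Rightarrow> real"
  shows "x \<notin> closure {x. f x \<noteq> 0} \<Longrightarrow> f x = 0"
proof (rule ccontr)
  assume "x \<notin> closure {x. f x \<noteq> 0}" "f x \<noteq> 0"
  then have "x \<in> {x. f x \<noteq> 0}" by simp
  then have "x \<in> closure {x. f x \<noteq> 0}" by (rule subsetD[OF closure_subset])
  then show False using \<open>x \<notin> closure {x. f x \<noteq> 0}\<close> by contradiction
qed

lemma bounded_cpt_supp:
  fixes f :: "real^'d \<Rightarrow> real"
  assumes c: "continuous_on UNIV f" and K: "compact (closure {x. f x \<noteq> 0})"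
  shows "\<exists>M\<ge>0. \<forall>x. \<bar>f x\<bar> \<le> M"
proof -
  have "compact (f ` closure {x. f x \<noteq> 0})"
    by (rule compact_continuous_image[OF continuous_on_subset[OF c] K]) auto
  then obtain b where b: "b > 0" "\<forall>y\<in>f ` closure {x. f x \<noteq> 0}. norm y \<le> b"
    using compact_imp_bounded bounded_pos by metis
  have "\<bar>f x\<bar> \<le> b" for x
  proof (cases "x \<in> closure {x. f x \<noteq> 0}")
    case True then show ?thesis using b by auto
  next
    case False then show ?thesis using supp_zero[OF False] b by simp
  qed
  then show ?thesis using b by (intro exI[of _ b]) auto
qed

lemma lipschitz_axis:
  fixes f :: "real^'d \<Rightarrow> real"
  assumes sm: "smooth_fun f" and K: "compact (closure {x. f x \<noteq> 0})"
  shows "\<exists>L\<ge>0. \<forall>x i s. \<bar>f (x + s *\<^sub>R axis i 1) - f x\<bar> \<le> L * \<bar>s\<bar>"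
proof -
  define C where "C = closure {x. f x \<noteq> 0}"
  define Dp where "Dp i y = frechet_derivative f (at y) (axis i 1)" for i y
  have Dp_grad: "Dp i y = grad f y $ i" for i y by (simp add: Dp_def grad_def)
  have cD: "continuous_on UNIV (Dp i)" for i
    unfolding Dp_def[abs_def] by (rule smooth_cont[OF smooth_partial[OF sm]])
  have zD: "Dp i y = 0" if "y \<notin> C" for i y
  proof -
    have "open (- C)" unfolding C_def by (intro open_Compl closed_closure)
    moreover have "\<forall>z\<in>- C. 0 = f z" using supp_zero unfolding C_def by fastforce
    ultimately have "(f has_derivative (\<lambda>_. 0)) (at y)"
      using has_derivative_transform_within_open[of "\<lambda>_. 0::real" "\<lambda>_. 0" y UNIV "- C" f] that by auto
    then have "frechet_derivative f (at y) = (\<lambda>_. 0)" using frechet_derivative_at by metis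
    then show ?thesis by (simp add: Dp_def)
  qed
  define S where "S y = (\<Sum>i\<in>UNIV. \<bar>Dp i y\<bar>)" for y
  have cS: "continuous_on UNIV S" unfolding S_def[abs_def]
    by (intro continuous_intros cD)
  have zS: "y \<notin> C \<Longrightarrow> S y = 0" for y by (simp add: S_def zD)
  have "compact (S ` C)"
    by (rule compact_continuous_image[OF continuous_on_subset[OF cS]]) (use K in \<open>auto simp: C_def\<close>)
  then obtain b where b: "b > 0" "\<forall>z\<in>S ` C. norm z \<le> b"
    using compact_imp_bounded bounded_pos by metis
  have Sb: "S y \<le> b" for y
    using b zS by (cases "y \<in> C") auto
  have Db: "\<bar>Dp i y\<bar> \<le> b" for i y
  proof -
    have "\<bar>Dp i y\<bar> \<le> S y" unfolding S_def
      by (rule member_le_sum) auto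
    then show ?thesis using Sb[of y] by linarith
  qed
  have main: "\<bar>f (x + s *\<^sub>R axis i 1) - f x\<bar> \<le> b * \<bar>s\<bar>" for x i s
  proof -
    define \<phi> where "\<phi> = (\<lambda>r. f (x + r *\<^sub>R axis i 1))"
    have dphi: "(\<phi> has_real_derivative Dp i (x + r *\<^sub>R axis i 1)) (at r)" for r
    proof -
      have "((\<lambda>r. x + r *\<^sub>R axis i 1) has_derivative (\<lambda>r. r *\<^sub>R axis i 1)) (at r)"
        by (auto intro!: derivative_eq_intros)
      from has_derivative_compose[OF this has_derivative_grad[OF smooth_diff[OF sm]]]
      have "(\<phi> has_derivative (\<lambda>q. grad f (x + r *\<^sub>R axis i 1) \<bullet> (q *\<^sub>R axis i 1))) (at r)"
        by (simp add: \<phi>_def)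
      moreover have "(\<lambda>q. grad f (x + r *\<^sub>R axis i 1) \<bullet> (q *\<^sub>R axis i 1)) = (*) (Dp i (x + r *\<^sub>R axis i 1))"
        by (auto simp: Dp_grad inner_axis mult.commute)
      ultimately show ?thesis by (simp add: has_field_derivative_def)
    qed
    have "\<bar>\<phi> s - \<phi> 0\<bar> \<le> b * \<bar>s\<bar>"
    proof (cases s "0::real" rule: linorder_cases)
      case less
      then obtain z where "\<phi> 0 - \<phi> s = (0 - s) * Dp i (x + z *\<^sub>R axis i 1)"
        using MVT2[OF less dphi] by blast
      then show ?thesis using Db[of i "x + z *\<^sub>R axis i 1"] less
        by (simp add: abs_mult abs_minus_commute mult.commute mult_right_mono)
    next
      case greater
      then obtain z where "\<phi> s - \<phi> 0 = (s - 0) * Dp i (x + z *\<^sub>R axis i 1)"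
        using MVT2[OF greater dphi] by blast
      then show ?thesis using Db[of i "x + z *\<^sub>R axis i 1"] greater
        by (simp add: abs_mult mult.commute mult_right_mono)
    qed simp
    then show ?thesis by (simp add: \<phi>_def)
  qed
  show ?thesis using b(1) main by (intro exI[of _ b]) auto
qed


lemma tDN_sub: "N \<ge> 1 \<Longrightarrow> x \<in> DN N D \<Longrightarrow> pt N x \<in> D"
  by (auto simp: DN_def cube_def pt_def)

lemma h_step:
  assumes N: "N \<ge> 1" and sol: "discrete_solution V \<rho> \<delta> D h0 N h" and t: "t \<ge> 0"
  shows "h t \<theta> = h t (pt N (idx N \<theta>))"
proof -
  have "step_fun N (h t)" using sol t by (simp add: discrete_solution_def)
  then show ?thesis using in_idx_cube[OF N, of \<theta>] idx_lattice[of N \<theta>]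
    unfolding step_fun_def pt_def by blast
qed

lemma h0_grid:
  fixes y :: "real^'d"
  assumes N: "N \<ge> 1" and sol: "discrete_solution V \<rho> \<delta> D h0 N h" and y: "y \<in> lattice"
  shows "h 0 (pt N y) = (if y \<in> DN N D then real N ^ CARD('d) * integral (cube (pt N y) (1 / real N)) h0 else 0)"
proof (cases "y \<in> DN N D")
  case True
  then have "pt N y \<in> tDN N D" using tDN_pt[OF N y] by simp
  then show ?thesis using sol y True in_own_cube[OF N y] unfolding discrete_solution_def pt_def by auto
next
  case False
  then have "pt N y \<notin> tDN N D" using tDN_pt[OF N y] by simp
  then show ?thesis using sol False unfolding discrete_solution_def by auto
qed

lemma nab_formula:
  assumes N: "N \<ge> 1" and sol: "discrete_solution V \<rho> \<delta> D h0 N h"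
  shows "nablaN_i N i (h 0) \<theta> = real N * (h 0 (pt N (idx N \<theta> + axis i 1)) - h 0 (pt N (idx N \<theta>)))"
  using h_step[OF N sol, of 0 \<theta>] h_step[OF N sol, of 0 "\<theta> + (1 / real N) *\<^sub>R axis i 1"]
  by (simp add: nablaN_i_def idx_shift[OF N])

lemma cube_cbox_integrable:
  fixes f :: "real^'d \<Rightarrow> real"
  assumes "continuous_on UNIV f" "l > 0"
  shows "(f has_integral integral (cube c l) f) (cube c l)"
    "integral (cube c l) f = integral (cbox (c - (l/2) *\<^sub>R 1) (c + (l/2) *\<^sub>R 1)) f"
proof -
  have i: "(f has_integral integral (cbox (c - (l/2) *\<^sub>R 1) (c + (l/2) *\<^sub>R 1)) f) (cbox (c - (l/2) *\<^sub>R 1) (c + (l/2) *\<^sub>R 1))"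
    using integrable_continuous[OF continuous_on_subset[OF assms(1)]] by (simp add: integrable_integral)
  then have j: "(f has_integral integral (cbox (c - (l/2) *\<^sub>R 1) (c + (l/2) *\<^sub>R 1)) f) (cube c l)"
    using cube_has_integral_iff[OF assms(2)] by blast
  then show e: "integral (cube c l) f = integral (cbox (c - (l/2) *\<^sub>R 1) (c + (l/2) *\<^sub>R 1)) f"
    by (simp add: integral_unique)
  show "(f has_integral integral (cube c l) f) (cube c l)"
    unfolding e by (rule j)
qed

context
  fixes V :: "real \<Rightarrow> real" and \<rho> :: "real^'d \<Rightarrow> real" and \<delta> :: real
    and N :: nat and D :: "(real^'d) set" and h0 :: "real^'d \<Rightarrow> real"
    and h :: "real \<Rightarrow> real^'d \<Rightarrow> real" and M0 L \<eta> :: real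
  assumes N: "N \<ge> 1"
    and sol: "discrete_solution V \<rho> \<delta> D h0 N h"
    and hc: "continuous_on UNIV h0"
    and M0: "\<forall>x. \<bar>h0 x\<bar> \<le> M0"
    and L: "\<forall>x i s. \<bar>h0 (x + s *\<^sub>R axis i 1) - h0 x\<bar> \<le> L * \<bar>s\<bar>"
    and eta: "\<eta> > 0" "\<forall>z. \<forall>q. q \<notin> D \<longrightarrow> dist z q < \<eta> \<longrightarrow> h0 z = 0"
begin

lemma Np: "1 / real N > 0" using N by simp

lemma cube_int_bound: "\<bar>integral (cube c (1 / real N)) h0\<bar> \<le> M0 * (1 / real N) ^ CARD('d)"
proof -
  have "norm (integral (cbox (c - ((1 / real N)/2) *\<^sub>R 1) (c + ((1 / real N)/2) *\<^sub>R 1)) h0)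
      \<le> M0 * measure lborel (cbox (c - ((1 / real N)/2) *\<^sub>R 1) (c + ((1 / real N)/2) *\<^sub>R (1::real^'d)))"
    by (rule has_integral_bound[where f=h0])
       (use M0 integrable_continuous[OF continuous_on_subset[OF hc]] in \<open>auto simp: integrable_integral intro: order_trans[OF abs_ge_zero]\<close>)
  then show ?thesis using cube_cbox_integrable(2)[OF hc Np, of c] content_cube_box[OF Np, of c] by simp
qed

lemma h0_bound: "\<bar>h 0 \<theta>\<bar> \<le> M0"
proof -
  have M0n: "M0 \<ge> 0" using M0 by (meson abs_ge_zero order_trans)
  have "\<bar>h 0 (pt N (idx N \<theta>))\<bar> \<le> M0"
  proof (cases "idx N \<theta> \<in> DN N D")
    case True
    have "\<bar>real N ^ CARD('d) * integral (cube (pt N (idx N \<theta>)) (1 / real N)) h0\<bar>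
        \<le> real N ^ CARD('d) * (M0 * (1 / real N) ^ CARD('d))"
      by (simp add: abs_mult cube_int_bound mult_left_mono)
    also have "\<dots> = M0" using N by (simp add: power_one_over)
    finally show ?thesis using True h0_grid[OF N sol idx_lattice[of N \<theta>]] by simp
  qed (use h0_grid[OF N sol idx_lattice[of N \<theta>]] M0n in simp)
  then show ?thesis using h_step[OF N sol, of 0 \<theta>] by simp
qed

lemma nab_crude: "\<bar>nablaN_i N i (h 0) \<theta>\<bar> \<le> 2 * real N * M0"
proof -
  have "\<bar>h 0 (\<theta> + (1 / real N) *\<^sub>R axis i 1) - h 0 \<theta>\<bar> \<le> 2 * M0"
    using h0_bound[of \<theta>] h0_bound[of "\<theta> + (1 / real N) *\<^sub>R axis i 1"] by linarith
  then have "real N * \<bar>h 0 (\<theta> + (1 / real N) *\<^sub>R axis i 1) - h 0 \<theta>\<bar> \<le> real N * (2 * M0)"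
    by (rule mult_left_mono) auto
  then show ?thesis by (simp add: nablaN_i_def abs_mult)
qed

end
context
  fixes V :: "real \<Rightarrow> real" and \<rho> :: "real^'d \<Rightarrow> real" and \<delta> :: real
    and N :: nat and D :: "(real^'d) set" and h0 :: "real^'d \<Rightarrow> real"
    and h :: "real \<Rightarrow> real^'d \<Rightarrow> real" and M0 L \<eta> :: real
  assumes N: "N \<ge> 1"
    and sol: "discrete_solution V \<rho> \<delta> D h0 N h"
    and hc: "continuous_on UNIV h0"
    and M0: "\<forall>x. \<bar>h0 x\<bar> \<le> M0"
    and L: "\<forall>x i s. \<bar>h0 (x + s *\<^sub>R axis i 1) - h0 x\<bar> \<le> L * \<bar>s\<bar>"
    and eta: "\<eta> > 0" "\<forall>z. \<forall>q. q \<notin> D \<longrightarrow> dist z q < \<eta> \<longrightarrow> h0 z = 0"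
    and Nbig: "3 * real CARD('d) < real N * \<eta>"
begin

lemma big_zero_cube:
  assumes y: "y \<in> lattice" "y \<notin> DN N D" and th: "\<theta> \<in> cube (pt N y) (1 / real N)"
  shows "h0 \<theta> = 0"
proof -
  have Npos: "real N > 0" using N by simp
  obtain q where q: "q \<notin> D" "\<forall>j. \<bar>q$j - pt N y $ j\<bar> \<le> 5 / (2 * real N)"
  proof (cases "y \<in> scaled_lattice N D")
    case False
    then have "pt N y \<notin> D"
      using y Npos by (auto simp: scaled_lattice_def pt_def image_iff)
    then show ?thesis using that[of "pt N y"] Npos by simp
  next
    case True
    then have "\<not> cube ((1 / real N) *\<^sub>R y) (5 / real N) \<subseteq> D" using y by (simp add: DN_def)
    then obtain q where "q \<in> cube ((1 / real N) *\<^sub>R y) (5 / real N)" "q \<notin> D" by blast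
    moreover have "\<forall>j. \<bar>q$j - pt N y $ j\<bar> \<le> 5 / (2 * real N)"
    proof
      fix j
      have "y$j / real N - 5 / (real N * 2) \<le> q$j \<and> q$j < y$j / real N + 5 / (real N * 2)"
        using \<open>q \<in> cube ((1 / real N) *\<^sub>R y) (5 / real N)\<close> by (simp add: cube_def)
      then show "\<bar>q$j - pt N y $ j\<bar> \<le> 5 / (2 * real N)"
        by (simp add: pt_def abs_le_iff mult.commute)
    qed
    ultimately show ?thesis using that[of q] by blast
  qed
  have tj: "\<bar>\<theta>$j - q$j\<bar> \<le> 3 / real N" for j
  proof -
    have "pt N y $ j - 1 / (real N * 2) \<le> \<theta> $ j \<and> \<theta> $ j < pt N y $ j + 1 / (real N * 2)"
      using th by (simp add: cube_def)
    then have "\<bar>\<theta>$j - pt N y $ j\<bar> \<le> 1 / (2 * real N)" by (simp add: abs_le_iff mult.commute)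
    moreover have "5 / (2 * real N) + 1 / (2 * real N) = 3 / real N" by (simp add: field_simps)
    ultimately show ?thesis using q(2)[rule_format, of j] by linarith
  qed
  have "dist \<theta> q \<le> (\<Sum>j\<in>UNIV. \<bar>(\<theta> - q)$j\<bar>)" unfolding dist_norm by (rule norm_le_l1_cart)
  also have "\<dots> \<le> (\<Sum>j\<in>(UNIV::'d set). 3 / real N)" by (intro sum_mono) (use tj in simp)
  also have "\<dots> = 3 * real CARD('d) / real N" by simp
  also have "\<dots> < \<eta>" using Nbig Npos by (simp add: divide_simps mult.commute)
  finally show ?thesis using eta(2) q(1) by blast
qed

lemma h0_grid_big:
  fixes y :: "real^'d"
  assumes y: "y \<in> lattice"
  shows "h 0 (pt N y) = real N ^ CARD('d) * integral (cube (pt N y) (1 / real N)) h0"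
proof (cases "y \<in> DN N D")
  case False
  have "integral (cube (pt N y) (1 / real N)) h0 = integral (cube (pt N y) (1 / real N)) (\<lambda>_. 0)"
    by (rule integral_cong) (use big_zero_cube[OF y False] in auto)
  then show ?thesis using h0_grid[OF N sol y] False by simp
qed (use h0_grid[OF N sol y] in simp)

lemma nab_big: "\<bar>nablaN_i N i (h 0) \<theta>\<bar> \<le> L"
proof -
  define p where "p = idx N \<theta>"
  define c where "c = pt N p"
  define a where "a = (1 / real N) *\<^sub>R axis i (1::real)"
  define l where "l = 1 / real N"
  define lo where "lo = c - (l/2) *\<^sub>R (1::real^'d)"
  define hi where "hi = c + (l/2) *\<^sub>R (1::real^'d)"
  have lpos: "l > 0" using N by (simp add: l_def)
  have pl: "p \<in> lattice" by (simp add: p_def idx_lattice)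
  have c2: "pt N (p + axis i 1) = c + a" by (simp add: c_def a_def pt_shift)
  have I1: "integral (cube c l) h0 = integral (cbox lo hi) h0"
    using cube_cbox_integrable(2)[OF hc lpos] by (simp add: lo_def hi_def)
  have I2: "integral (cube (c + a) l) h0 = integral (cbox (lo + a) (hi + a)) h0"
    using cube_cbox_integrable(2)[OF hc lpos, of "c + a"] by (simp add: lo_def hi_def algebra_simps)
  have int_h: "(h0 has_integral integral (cbox lo hi) h0) (cbox lo hi)"
    using integrable_continuous[OF continuous_on_subset[OF hc]] by (simp add: integrable_integral)
  have "(h0 has_integral integral (cbox (lo + a) (hi + a)) h0) (cbox (lo + a) (hi + a))"
    using integrable_continuous[OF continuous_on_subset[OF hc]] by (simp add: integrable_integral)
  then have int_s: "((h0 \<circ> (+) a) has_integral integral (cbox (lo + a) (hi + a)) h0) (cbox lo hi)"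
    using has_integral_shift_cbox_iff by blast
  have int_d: "((\<lambda>x. h0 (a + x) - h0 x) has_integral
      (integral (cbox (lo + a) (hi + a)) h0 - integral (cbox lo hi) h0)) (cbox lo hi)"
    using has_integral_diff[OF int_s int_h] by (simp add: o_def)
  have bnd: "norm (integral (cbox (lo + a) (hi + a)) h0 - integral (cbox lo hi) h0)
      \<le> (L * l) * measure lborel (cbox lo hi)"
  proof (rule has_integral_bound[OF _ int_d])
    have "\<bar>h0 (0 + 1 *\<^sub>R axis i 1) - h0 0\<bar> \<le> L * \<bar>1\<bar>" using L by blast
    then have "\<bar>h0 (0 + 1 *\<^sub>R axis i 1) - h0 0\<bar> \<le> L" by simp
    then have "0 \<le> L" using abs_ge_zero order_trans by blast
    then show "0 \<le> L * l" using lpos by simp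
    fix x assume "x \<in> cbox lo hi"
    show "norm (h0 (a + x) - h0 x) \<le> L * l"
      using L[rule_format, where x=x and i=i and s=l] lpos by (simp add: a_def l_def add.commute)
  qed
  have meas: "measure lborel (cbox lo hi) = l ^ CARD('d)"
    using content_cube_box[OF lpos, of c] by (simp add: lo_def hi_def)
  have "nablaN_i N i (h 0) \<theta> = real N * (real N ^ CARD('d) *
      (integral (cbox (lo + a) (hi + a)) h0 - integral (cbox lo hi) h0))"
    using nab_formula[OF N sol, of i \<theta>] h0_grid_big[OF lattice_axis(1)[OF pl, of i]] h0_grid_big[OF pl]
    unfolding p_def[symmetric] c2 c_def[symmetric] l_def[symmetric] I1[symmetric] I2[symmetric]
    by (simp add: algebra_simps)
  then have "\<bar>nablaN_i N i (h 0) \<theta>\<bar> \<le> real N * (real N ^ CARD('d) * ((L * l) * l ^ CARD('d)))"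
    using bnd meas N by (simp add: abs_mult mult_left_mono)
  also have "\<dots> = L"
  proof -
    have "real N \<noteq> 0" using N by simp
    then show ?thesis by (simp add: l_def power_one_over field_simps)
  qed
  finally show ?thesis .
qed

end


context
  fixes V :: "real \<Rightarrow> real" and \<rho> :: "real^'d \<Rightarrow> real" and \<delta> :: real
    and N :: nat and D :: "(real^'d) set" and h0 :: "real^'d \<Rightarrow> real"
    and h :: "real \<Rightarrow> real^'d \<Rightarrow> real" and cm cp :: real
  assumes sdd: "\<forall>v. (sigma_delta V \<rho> \<delta> has_derivative (\<lambda>k. grad (sigma_delta V \<rho> \<delta>) v \<bullet> k)) (at v)"
    and N: "N \<ge> 1" and Db: "bounded D"
    and sol: "discrete_solution V \<rho> \<delta> D h0 N h"
    and cm: "cm > 0"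
    and pb: "\<forall>u. cm/2 * (norm u)\<^sup>2 \<le> \<psi> V \<rho> \<delta> u \<and> \<psi> V \<rho> \<delta> u \<le> cp/2 * (norm u)\<^sup>2"
begin

lemma nab_step:
  assumes t: "t \<ge> 0"
  shows "nablaN N (h t) \<theta> = g N h t (idx N \<theta>)"
proof -
  have "nablaN_i N i (h t) \<theta> = g N h t (idx N \<theta>) $ i" for i
  proof -
    have "h t \<theta> = h t (pt N (idx N \<theta>))" by (rule h_step[OF N sol t])
    moreover have "h t (\<theta> + (1 / real N) *\<^sub>R axis i 1) = h t (pt N (idx N \<theta> + axis i 1))"
      using h_step[OF N sol t, of "\<theta> + (1 / real N) *\<^sub>R axis i 1"] by (simp add: idx_shift[OF N])
    ultimately show ?thesis
      by (simp add: g_comp[OF sdd N Db sol] a_def[OF sdd N Db sol] nablaN_i_def)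
  qed
  then show ?thesis by (simp add: nablaN_def vec_eq_iff)
qed

lemma g_zero:
  assumes t: "t \<ge> 0" and x: "x \<in> lattice" "x \<notin> PP N D"
  shows "g N h t x = 0"
proof -
  have "x \<notin> DN N D" using x by (simp add: PP_def[OF sdd N Db sol])
  moreover have "x + axis i 1 \<notin> DN N D" for i
  proof
    assume "x + axis i 1 \<in> DN N D"
    then have "x \<in> PP N D" unfolding PP_def[OF sdd N Db sol] by (auto intro!: image_eqI[of _ _ "x + axis i 1"])
    then show False using x by simp
  qed
  ultimately have "a N h t x = 0" "\<And>i. a N h t (x + axis i 1) = 0"
    using a_zero[OF sdd N Db sol t] x lattice_axis by auto
  then show ?thesis
    by (simp add: vec_eq_iff g_comp[OF sdd N Db sol])
qed

lemma grad_integral: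
  assumes t: "t \<ge> 0"
  shows "((\<lambda>\<theta>. (norm (nablaN N (h t) \<theta>))\<^sup>2) has_integral
      (\<Sum>x\<in>PP N D. (norm (g N h t x))\<^sup>2) / real N ^ CARD('d)) UNIV"
proof -
  have "((\<lambda>\<theta>. (norm (nablaN N (h t) \<theta>))\<^sup>2) has_integral
      (\<Sum>x\<in>PP N D. (norm (nablaN N (h t) (pt N x)))\<^sup>2) / real N ^ CARD('d)) UNIV"
  proof (rule step_integral[OF N PP_finite[OF sdd N Db sol] PP_lattice[OF sdd N Db sol]])
    show "\<forall>\<theta>. (norm (nablaN N (h t) \<theta>))\<^sup>2 = (norm (nablaN N (h t) (pt N (idx N \<theta>))))\<^sup>2"
      using nab_step[OF t] idx_pt[OF N idx_lattice] by metis
    show "\<forall>x\<in>lattice - PP N D. (norm (nablaN N (h t) (pt N x)))\<^sup>2 = 0"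
      using g_zero[OF t] by (simp add: g_def[OF sdd N Db sol])
  qed
  then show ?thesis by (simp add: g_def[OF sdd N Db sol])
qed

lemma sum_decr:
  assumes t: "t \<ge> 0"
  shows "(\<Sum>x\<in>PP N D. (norm (g N h t x))\<^sup>2) \<le> (cp/cm) * (\<Sum>x\<in>PP N D. (norm (g N h 0 x))\<^sup>2)"
proof -
  have "cm/2 * (\<Sum>x\<in>PP N D. (norm (g N h t x))\<^sup>2) \<le> F V \<rho> \<delta> N D h t"
    unfolding F_def[OF sdd N Db sol] sum_distrib_left using pb by (intro sum_mono) auto
  also have "\<dots> \<le> F V \<rho> \<delta> N D h 0" by (rule F_decr[OF sdd N Db sol t])
  also have "\<dots> \<le> cp/2 * (\<Sum>x\<in>PP N D. (norm (g N h 0 x))\<^sup>2)"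
    unfolding F_def[OF sdd N Db sol] sum_distrib_left using pb by (intro sum_mono) auto
  finally have "cm/2 * (\<Sum>x\<in>PP N D. (norm (g N h t x))\<^sup>2) \<le> cp/2 * (\<Sum>x\<in>PP N D. (norm (g N h 0 x))\<^sup>2)" .
  then show ?thesis using cm by (simp add: field_simps)
qed

lemma D_bound:
  assumes t: "t \<ge> 0"
  shows "integral D (\<lambda>\<theta>. (norm (nablaN N (h t) \<theta>))\<^sup>2)
      \<le> (cp/cm) * integral UNIV (\<lambda>\<theta>. (norm (nablaN N (h 0) \<theta>))\<^sup>2)"
proof -
  let ?f = "\<lambda>\<theta>. (norm (nablaN N (h t) \<theta>))\<^sup>2"
  have it: "(?f has_integral (\<Sum>x\<in>PP N D. (norm (g N h t x))\<^sup>2) / real N ^ CARD('d)) UNIV"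
    by (rule grad_integral[OF t])
  have i0: "((\<lambda>\<theta>. (norm (nablaN N (h 0) \<theta>))\<^sup>2) has_integral (\<Sum>x\<in>PP N D. (norm (g N h 0 x))\<^sup>2) / real N ^ CARD('d)) UNIV"
    by (rule grad_integral) simp
  have "integral D ?f \<le> integral UNIV ?f"
  proof (cases "?f integrable_on D")
    case True
    then show ?thesis using it by (intro integral_subset_le) auto
  next
    case False
    then have "integral D ?f = 0" by (simp add: not_integrable_integral)
    moreover have "0 \<le> integral UNIV ?f" using it by (intro integral_nonneg) auto
    ultimately show ?thesis by simp
  qed
  also have "integral UNIV ?f = (\<Sum>x\<in>PP N D. (norm (g N h t x))\<^sup>2) / real N ^ CARD('d)"
    using it by (simp add: integral_unique)
  also have "\<dots> \<le> ((cp/cm) * (\<Sum>x\<in>PP N D. (norm (g N h 0 x))\<^sup>2)) / real N ^ CARD('d)"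
    by (intro divide_right_mono sum_decr t) simp
  also have "\<dots> = (cp/cm) * integral UNIV (\<lambda>\<theta>. (norm (nablaN N (h 0) \<theta>))\<^sup>2)"
    using i0 by (simp add: integral_unique)
  finally show ?thesis .
qed

lemma integrable0: "(\<lambda>\<theta>. (norm (nablaN N (h 0) \<theta>))\<^sup>2) integrable_on UNIV"
  using grad_integral[of 0] by blast

end


lemma h_support:
  assumes N: "N \<ge> 1" and sol: "discrete_solution V \<rho> \<delta> D h0 N h" and t: "t \<ge> 0"
    and R: "\<forall>x\<in>D. norm x \<le> R" and z: "\<bar>z$j\<bar> > R + 1"
  shows "h t z = 0"
proof (rule ccontr)
  assume "h t z \<noteq> 0"
  then have "z \<in> tDN N D" using sol t unfolding discrete_solution_def by blast
  then obtain x where x: "x \<in> DN N D" "z \<in> cube ((1 / real N) *\<^sub>R x) (1 / real N)"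
    by (auto simp: tDN_def)
  have "pt N x \<in> D" by (rule tDN_sub[OF N x(1)])
  then have "\<bar>pt N x $ j\<bar> \<le> R" using R component_le_norm_cart[of "pt N x" j] by force
  moreover have "\<bar>z$j - pt N x $ j\<bar> \<le> 1"
  proof -
    have "pt N x $ j - 1 / real N / 2 \<le> z$j \<and> z$j < pt N x $ j + 1 / real N / 2"
      using x(2) by (simp add: cube_def pt_def)
    moreover have "1 / real N / 2 \<le> 1" using N by (simp add: divide_simps)
    ultimately show ?thesis by (simp add: abs_le_iff)
  qed
  ultimately show False using z by linarith
qed

lemma nab_support:
  fixes \<theta> :: "real^'d"
  assumes N: "N \<ge> 1" and sol: "discrete_solution V \<rho> \<delta> D h0 N h"
    and R: "\<forall>x\<in>D. norm x \<le> R" and th: "\<theta> \<notin> cbox (- ((R+2) *\<^sub>R 1)) ((R+2) *\<^sub>R 1)"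
  shows "nablaN N (h 0) \<theta> = 0"
proof -
  have "\<exists>j. \<bar>\<theta>$j\<bar> > R + 2"
  proof (rule ccontr)
    assume "\<not> (\<exists>j. \<bar>\<theta>$j\<bar> > R + 2)"
    then have "\<forall>j. \<bar>\<theta>$j\<bar> \<le> R + 2" by (simp add: not_less)
    then have "\<forall>j. - (R + 2) \<le> \<theta>$j \<and> \<theta>$j \<le> R + 2" by (metis abs_le_iff minus_le_iff)
    then have "\<theta> \<in> cbox (- ((R+2) *\<^sub>R 1)) ((R+2) *\<^sub>R 1)" by (simp add: mem_box_cart)
    then show False using th by contradiction
  qed
  then obtain j where j: "\<bar>\<theta>$j\<bar> > R + 2" by blast
  have "h 0 \<theta> = 0" using h_support[OF N sol _ R, where j=j and z=\<theta> and t=0] j by simp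
  moreover have "h 0 (\<theta> + (1 / real N) *\<^sub>R axis i 1) = 0" for i
  proof (rule h_support[OF N sol _ R, where j=j])
    have "\<bar>((1 / real N) *\<^sub>R axis i (1::real)) $ j\<bar> \<le> 1" using N by (simp add: axis_def divide_simps)
    then show "R + 1 < \<bar>(\<theta> + (1 / real N) *\<^sub>R axis i 1) $ j\<bar>" using j by (simp only: vector_add_component)
  qed simp
  ultimately show ?thesis by (simp add: nablaN_def nablaN_i_def vec_eq_iff)
qed

theorem proposition3p8:
  fixes D :: "(real^'d) set"
    and V :: "real \<Rightarrow> real" and V' V'' :: "real \<Rightarrow> real"
    and c_minus c_plus :: real
    and \<rho> h0 :: "real^'d \<Rightarrow> real"
    and \<delta> T :: real
  assumes D: "admissible_domain D"
    and V_C2: "\<forall>x. (V has_real_derivative V' x) (at x) \<and> (V' has_real_derivative V'' x) (at x)"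
    and V''_cont: "continuous_on UNIV V''"
    and V_even: "\<forall>x. V (- x) = V x"
    and c_pos: "0 < c_minus" "0 < c_plus"
    and V''_bounds: "\<forall>x. c_minus \<le> V'' x \<and> V'' x \<le> c_plus"
    and sigma_C1: "\<forall>u::real^'d. surface_tension V differentiable (at u)"
      "continuous_on UNIV (grad (surface_tension V :: real^'d \<Rightarrow> real))"
    and sigma_convex: "\<forall>u v :: real^'d. c_minus * (norm (u - v))\<^sup>2
          \<le> (grad (surface_tension V) u - grad (surface_tension V) v) \<bullet> (u - v)
        \<and> (grad (surface_tension V) u - grad (surface_tension V) v) \<bullet> (u - v)
          \<le> c_plus * (norm (u - v))\<^sup>2"
    and rho_smooth: "smooth_fun \<rho>"
    and rho_nonneg: "\<forall>v. 0 \<le> \<rho> v"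
    and rho_sym: "\<forall>v. \<rho> (- v) = \<rho> v"
    and rho_supp: "closure {v. \<rho> v \<noteq> 0} \<subseteq> cball 0 1"
    and rho_int: "integral UNIV \<rho> = 1"
    and delta: "0 < \<delta>" "\<delta> \<le> 1"
    and h0_smooth: "smooth_fun h0"
    and h0_supp: "compact (closure {x. h0 x \<noteq> 0})" "closure {x. h0 x \<noteq> 0} \<subseteq> D"
    and T: "0 < T"
  shows "\<exists>B. \<forall>N\<ge>1. \<forall>h. discrete_solution V \<rho> \<delta> D h0 N h \<longrightarrow>
           (\<forall>t\<in>{0..T}. integral D (\<lambda>\<theta>. (norm (nablaN N (h t) \<theta>))\<^sup>2) \<le> B)"
proof -
  have rc: "continuous_on UNIV \<rho>" by (rule smooth_cont[OF rho_smooth])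
  have hc: "continuous_on UNIV h0" by (rule smooth_cont[OF h0_smooth])
  note SF = sd_facts[OF sigma_C1(1) sigma_C1(2) sigma_convex c_pos(1) rc rho_nonneg rho_supp rho_int delta(1) delta(2)]
  have sdd: "\<forall>v. (sigma_delta V \<rho> \<delta> has_derivative (\<lambda>k. grad (sigma_delta V \<rho> \<delta>) v \<bullet> k)) (at v)"
    using SF(1) by blast
  have Dopen: "open D" and Db: "bounded D" using D by (auto simp: admissible_domain_def)
  obtain R where R: "\<forall>x\<in>D. norm x \<le> R" using Db by (auto simp: bounded_iff)
  obtain M0 where M0: "M0 \<ge> 0" "\<forall>x. \<bar>h0 x\<bar> \<le> M0" using bounded_cpt_supp[OF hc h0_supp(1)] by blast
  obtain L where L: "L \<ge> 0" "\<forall>x i s. \<bar>h0 (x + s *\<^sub>R axis i 1) - h0 x\<bar> \<le> L * \<bar>s\<bar>"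
    using lipschitz_axis[OF h0_smooth h0_supp(1)] by blast
  obtain \<eta> where eta0: "\<eta> > 0" "\<forall>x\<in>closure {x. h0 x \<noteq> 0}. \<forall>y\<in>- D. \<eta> \<le> dist x y"
  proof -
    have "closed (- D)" using Dopen by (simp add: closed_Compl)
    moreover have "closure {x. h0 x \<noteq> 0} \<inter> - D = {}" using h0_supp(2) by blast
    ultimately show ?thesis using separate_compact_closed[OF h0_supp(1), of "- D"] that by blast
  qed
  have eta: "\<forall>z q. q \<notin> D \<longrightarrow> dist z q < \<eta> \<longrightarrow> h0 z = 0"
  proof (intro allI impI)
    fix z q assume q: "q \<notin> D" "dist z q < \<eta>"
    show "h0 z = 0"
    proof (rule ccontr)
      assume "h0 z \<noteq> 0"
      then have "z \<in> {x. h0 x \<noteq> 0}" by simp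
      then have "z \<in> closure {x. h0 x \<noteq> 0}" by (rule subsetD[OF closure_subset])
      then have "\<eta> \<le> dist z q" using eta0(2) q(1) by blast
      then show False using q(2) by simp
    qed
  qed
  obtain N1 :: nat where N1: "3 * real CARD('d) / \<eta> < real N1" using reals_Archimedean2 by blast
  define L' where "L' = max L (2 * real N1 * M0)"
  define E where "E = cbox (- ((R+2) *\<^sub>R 1)) ((R+2) *\<^sub>R (1::real^'d))"
  define B0 where "B0 = real CARD('d) * L'\<^sup>2 * measure lborel E"
  show ?thesis
  proof (intro exI[of _ "(c_plus / c_minus) * B0"] allI impI ballI)
    fix N :: nat and h :: "real \<Rightarrow> real^'d \<Rightarrow> real" and t :: real
    assume N: "N \<ge> 1" and sol: "discrete_solution V \<rho> \<delta> D h0 N h" and t: "t \<in> {0..T}"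
    have pb: "\<forall>u. c_minus/2 * (norm u)\<^sup>2 \<le> \<psi> V \<rho> \<delta> u \<and> \<psi> V \<rho> \<delta> u \<le> c_plus/2 * (norm u)\<^sup>2"
      using SF(2)[of _ 0] SF(3)[of _ 0] by (simp add: \<psi>_def[OF sdd N Db sol])
    have DB: "integral D (\<lambda>\<theta>. (norm (nablaN N (h t) \<theta>))\<^sup>2)
      \<le> (c_plus/c_minus) * integral UNIV (\<lambda>\<theta>. (norm (nablaN N (h 0) \<theta>))\<^sup>2)"
      using D_bound[OF sdd N Db sol c_pos(1) pb] t by simp
    have comp: "\<bar>nablaN_i N i (h 0) \<theta>\<bar> \<le> L'" for i \<theta>
    proof (cases "3 * real CARD('d) < real N * \<eta>")
      case True
      then show ?thesis using nab_big[OF N sol hc M0(2) L(2) eta0(1) eta True, of i \<theta>] by (simp add: L'_def le_max_iff_disj)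
    next
      case False
      then have "real N * \<eta> \<le> 3 * real CARD('d)" by simp
      then have "real N \<le> 3 * real CARD('d) / \<eta>" using eta0(1) by (simp add: field_simps)
      then have "real N \<le> real N1" using N1 by simp
      then have "2 * real N * M0 \<le> 2 * real N1 * M0" using M0(1) by (simp add: mult_right_mono)
      then show ?thesis using nab_crude[OF N sol hc M0(2) L(2) eta0(1) eta, of i \<theta>] by (simp add: L'_def le_max_iff_disj)
    qed
    have pw: "(norm (nablaN N (h 0) \<theta>))\<^sup>2 \<le> (if \<theta> \<in> E then real CARD('d) * L'\<^sup>2 else 0)" for \<theta>
    proof (cases "\<theta> \<in> E")
      case True
      have "(norm (nablaN N (h 0) \<theta>))\<^sup>2 = (\<Sum>i\<in>UNIV. (nablaN_i N i (h 0) \<theta>)\<^sup>2)"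
        unfolding power2_norm_eq_inner by (simp add: inner_vec_def nablaN_def power2_eq_square)
      also have "\<dots> \<le> (\<Sum>i\<in>(UNIV::'d set). L'\<^sup>2)"
      proof (rule sum_mono)
        fix i show "(nablaN_i N i (h 0) \<theta>)\<^sup>2 \<le> L'\<^sup>2"
          using comp[of i \<theta>] by (simp add: abs_le_square_iff[symmetric] abs_le_iff)
      qed
      finally show ?thesis using True by simp
    next
      case False
      then show ?thesis using nab_support[OF N sol R] by (simp add: E_def)
    qed
    have iE: "((\<lambda>\<theta>. if \<theta> \<in> E then real CARD('d) * L'\<^sup>2 else 0) has_integral B0) UNIV"
    proof -
      have "((\<lambda>_. real CARD('d) * L'\<^sup>2) has_integral B0) E"
        using has_integral_const[of "real CARD('d) * L'\<^sup>2" "- ((R+2) *\<^sub>R 1)" "(R+2) *\<^sub>R (1::real^'d)"]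
        by (simp add: E_def B0_def mult.commute)
      then show ?thesis by (simp add: has_integral_restrict_UNIV)
    qed
    have "integral UNIV (\<lambda>\<theta>. (norm (nablaN N (h 0) \<theta>))\<^sup>2) \<le> integral UNIV (\<lambda>\<theta>. if \<theta> \<in> E then real CARD('d) * L'\<^sup>2 else 0)"
      by (rule integral_le[OF integrable0[OF sdd N Db sol c_pos(1) pb] has_integral_integrable[OF iE]]) (use pw in auto)
    also have "\<dots> = B0" using iE by (simp add: integral_unique)
    finally have "integral UNIV (\<lambda>\<theta>. (norm (nablaN N (h 0) \<theta>))\<^sup>2) \<le> B0" .
    moreover have "c_plus / c_minus \<ge> 0" using c_pos by simp
    ultimately show "integral D (\<lambda>\<theta>. (norm (nablaN N (h t) \<theta>))\<^sup>2) \<le> (c_plus / c_minus) * B0"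
      using DB by (meson mult_left_mono order_trans)
  qed
qed


end
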